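(* Let $b,c\in Z^{10}$ with $\sum_i b_i=\sum_i c_i=0$, and assume $t\nmid B_i$ and $t\nmid C_i$ for all odd $i$. Let $l$ be odd such that $t\mid B_l+B_{l+2}$ and $t\nmid B_i+B_{i+2}$ for all odd $i\neq l$, and likewise $t\mid C_l+C_{l+2}$ and $t\nmid C_i+C_{i+2}$ for all odd $i\neq l$ (indices mod $10$). Then $\mathbb{M}(b)\cong\mathbb{M}(c)$ as $B_{5,10}$-modules if and only if $$t\mid (B_{l-2}+B_l)\,C_l\,B_{l+4}\,C_{l+6}-(C_{l-2}+C_l)\,B_l\,C_{l+4}\,B_{l+6}.$$
   Context: Let $Z=\mathbb{C}[[t]]$. Let $\Gamma_{10}$ be the quiver with vertices $0,1,\dots,9$ (indices taken mod $10$) on a cycle and arrows $x_i\colon i-1\to i$, $y_i\colon i\to i-1$ for $i=1,\dots,10$. Let $B_{5,10}$ be the completed path algebra of $\Gamma_{10}$ modulo the closed ideal generated by $xy=yx$ and $x^5=y^5$ at every vertex. For $b=(b_1,\dots,b_{10})\in Z^{10}$ with $\sum_i b_i=0$, the $B_{5,10}$-module $\mathbb{M}(b)$ has $V_i=Z\oplus Z$ at every vertex, and for odd $j$: $x_j=\begin{pmatrix} t& b_j\\ 0&1\end{pmatrix}$, $y_j=\begin{pmatrix} 1&-b_j\\0&t\end{pmatrix}$; for even $j$: $x_j=\begin{pmatrix}1&b_j\\0&t\end{pmatrix}$, $y_j=\begin{pmatrix}t&-b_j\\0&1\end{pmatrix}$. An isomorphism $\mathbb{M}(b)\to\mathbb{M}(c)$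 is a family of invertible $Z$-linear maps $\varphi_i\colon Z^2\to Z^2$ commuting with all $x_i$ and $y_i$. For odd $i$ write $B_i=b_i+b_{i+1}$ and $C_i=c_i+c_{i+1}$ (indices mod $10$). *)

theory Defs
  imports "HOL-Analysis.Analysis" "HOL-Computational_Algebra.Formal_Power_Series"
begin

text \<open>Z = C[[t]] is the type complex fps; t is fps_X.
  A Z-linear endomorphism of Z^2 is a 2x2 matrix over Z (acting on column vectors).\<close>

type_synonym Zmat = "complex fps ^ 2 ^ 2"

definition mat2 :: "complex fps \<Rightarrow> complex fps \<Rightarrow> complex fps \<Rightarrow> complex fps \<Rightarrow> Zmat" where
  "mat2 a b c d = vector [vector [a, b], vector [c, d]]"

text \<open>Cyclic indexing: a tuple (b_1,...,b_10) is a function on int, read at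
  the representative of j mod 10 in {1..10}.\<close>
definition cyc :: "(int \<Rightarrow> 'a) \<Rightarrow> int \<Rightarrow> 'a" where
  "cyc b j = b (((j - 1) mod 10) + 1)"

definition Bsum :: "(int \<Rightarrow> complex fps) \<Rightarrow> int \<Rightarrow> complex fps" where
  "Bsum b i = cyc b i + cyc b (i + 1)"

text \<open>The arrow maps of M(b): x_j : V_{j-1} -> V_j, y_j : V_j -> V_{j-1}.\<close>
definition xmap :: "(int \<Rightarrow> complex fps) \<Rightarrow> int \<Rightarrow> Zmat" where
  "xmap b j = (if odd j then mat2 fps_X (cyc b j) 0 1 else mat2 1 (cyc b j) 0 fps_X)"

definition ymap :: "(int \<Rightarrow> complex fps) \<Rightarrow> int \<Rightarrow> Zmat" where
  "ymap b j = (if odd j then mat2 1 (- cyc b j) 0 fps_X else mat2 fps_X (- cyc b j) 0 1)"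

definition Miso :: "(int \<Rightarrow> complex fps) \<Rightarrow> (int \<Rightarrow> complex fps) \<Rightarrow> bool" where
  "Miso b c \<longleftrightarrow> (\<exists>\<phi> :: int \<Rightarrow> Zmat.
     (\<forall>i \<in> {0..9}. invertible (\<phi> i)) \<and>
     (\<forall>j \<in> {1..10}. \<phi> (j mod 10) ** xmap b j = xmap c j ** \<phi> (j - 1) \<and>
                     \<phi> (j - 1) ** ymap b j = ymap c j ** \<phi> (j mod 10)))"

end

theory Submission
  imports Defs
begin

lemma X_dvd_iff: "fps_X dvd (f::complex fps) \<longleftrightarrow> fps_nth f 0 = 0"
proof
  assume "fps_X dvd f" then obtain g where "f = fps_X * g" by (auto elim: dvdE)
  then show "fps_nth f 0 = 0" by simp
next
  assume h: "fps_nth f 0 = 0"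
  have "f = fps_X * fps_shift 1 f"
    by (rule fps_ext) (use h in \<open>auto simp: fps_shift_def\<close>)
  then show "fps_X dvd f" by (metis dvdI)
qed

lemma mat2_nth: "mat2 a b c d $ 1 $ 1 = a" "mat2 a b c d $ 1 $ 2 = b"
  "mat2 a b c d $ 2 $ 1 = c" "mat2 a b c d $ 2 $ 2 = d"
  by (simp_all add: mat2_def)

lemma forall_2: "(\<forall>i::2. P i) \<longleftrightarrow> P 1 \<and> P 2"
  by (metis exhaust_2)

lemma mat2_eq: "mat2 a b c d = mat2 a' b' c' d' \<longleftrightarrow> a = a' \<and> b = b' \<and> c = c' \<and> d = d'"
  by (metis mat2_nth)

lemma mat2_eta: "(M::Zmat) = mat2 (M$1$1) (M$1$2) (M$2$1) (M$2$2)"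
  unfolding vec_eq_iff forall_2 by (simp add: mat2_nth)

lemma sum_2: "(\<Sum>i\<in>(UNIV::2 set). f i) = f 1 + f 2"
  by (simp add: UNIV_2)

lemma mat2_mult: "mat2 a b c d ** mat2 e f g h = mat2 (a*e+b*g) (a*f+b*h) (c*e+d*g) (c*f+d*h)"
  unfolding vec_eq_iff forall_2 by (simp add: matrix_matrix_mult_def sum_2 mat2_nth)

lemma det_mat2: "det (mat2 a b c d) = a*d - b*c"
  by (simp add: det_2 mat2_nth)

lemma mat1_2: "(mat 1 :: Zmat) = mat2 1 0 0 1"
  unfolding vec_eq_iff forall_2 by (simp add: mat_def mat2_nth)

lemma inv_mat2:
  assumes "fps_nth (a*d - b*c) 0 \<noteq> 0"
  shows "invertible (mat2 a b c d)"
proof -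
  define u where "u = inverse (a*d - b*c)"
  have u1: "(a*d - b*c) * u = 1" using assms unfolding u_def by (rule inverse_mult_eq_1')
  show ?thesis unfolding invertible_def
    apply (rule exI[of _ "mat2 (d*u) (-b*u) (-c*u) (a*u)"])
    using u1 by (simp add: mat2_mult mat1_2 mat2_eq algebra_simps)
qed

lemma invertible_det0:
  assumes "invertible (A::Zmat)" shows "fps_nth (det A) 0 \<noteq> 0"
proof -
  obtain A' where "A ** A' = mat 1" using assms invertible_def by blast
  then have "det A * det A' = 1" by (metis det_I det_mul)
  then have "fps_nth (det A * det A') 0 = 1" by simp
  then show ?thesis by auto
qed

lemma X_ne0: "(fps_X :: complex fps) \<noteq> 0" by simp

lemma cancelX: "fps_X * (a::complex fps) = fps_X * b \<Longrightarrow> a = b"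
  by simp

lemma stepD:
  fixes P Q R S P1 Q1 R1 S1 P2 Q2 R2 S2 b1 c1 b2 c2 :: "complex fps"
  assumes e1: "mat2 P1 Q1 R1 S1 ** mat2 fps_X b1 0 1 = mat2 fps_X c1 0 1 ** mat2 P Q R S"
    and e2: "mat2 P2 Q2 R2 S2 ** mat2 1 b2 0 fps_X = mat2 1 c2 0 fps_X ** mat2 P1 Q1 R1 S1"
  shows "R = fps_X*R1" "R2 = fps_X*R1" "P2 = P + (c1+c2)*R1" "S2 = S - (b1+b2)*R1"
    "fps_X*Q2 = fps_X*Q + (c1+c2)*S - (b1+b2)*P - R1*(c1+c2)*(b1+b2)"
proof -
  from e1 have a1: "P1 * fps_X = fps_X * P + c1 * R" and a2: "P1*b1 + Q1 = fps_X*Q + c1*S"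
    and a3: "R1*fps_X = R" and a4: "R1*b1 + S1 = S"
    unfolding mat2_mult mat2_eq by algebra+
  from e2 have d1: "P2 = P1 + c2*R1" and d2: "P2*b2 + fps_X*Q2 = Q1 + c2*S1"
    and d3: "R2 = fps_X*R1" and d4: "R2*b2 + fps_X*S2 = fps_X*S1"
    unfolding mat2_mult mat2_eq by algebra+
  have "fps_X*P1 = fps_X*(P + c1*R1)" using a1 a3 by algebra
  then have p1: "P1 = P + c1*R1" by (rule cancelX)
  have "fps_X*S2 = fps_X*(S1 - R1*b2)" using d4 d3 by algebra
  then have s2: "S2 = S1 - R1*b2" by (rule cancelX)
  show "R = fps_X*R1" using a3 by (simp add: mult.commute)
  show "R2 = fps_X*R1" by (rule d3)
  show "P2 = P + (c1+c2)*R1" using d1 p1 by algebra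
  show "S2 = S - (b1+b2)*R1" using s2 a4 by algebra
  show "fps_X*Q2 = fps_X*Q + (c1+c2)*S - (b1+b2)*P - R1*(c1+c2)*(b1+b2)"
    using d2 a2 a4 d1 p1 by algebra
qed

lemma stepC1:
  fixes P Q \<rho> S b1 c1 :: "complex fps"
  shows "mat2 (P + c1*\<rho>) (fps_X*Q + c1*S - (P + c1*\<rho>)*b1) \<rho> (S - \<rho>*b1) ** mat2 fps_X b1 0 1
           = mat2 fps_X c1 0 1 ** mat2 P Q (fps_X*\<rho>) S"
  unfolding mat2_mult mat2_eq by (simp add: algebra_simps)

lemma stepC1y:
  fixes P Q \<rho> S b1 c1 :: "complex fps"
  shows "mat2 P Q (fps_X*\<rho>) S ** mat2 1 (-b1) 0 fps_X
           = mat2 1 (-c1) 0 fps_X ** mat2 (P + c1*\<rho>) (fps_X*Q + c1*S - (P + c1*\<rho>)*b1) \<rho> (S - \<rho>*b1)"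
  unfolding mat2_mult mat2_eq by (simp add: algebra_simps)

lemma stepC2:
  fixes P Q \<rho> S b1 c1 b2 c2 Q2 :: "complex fps"
  assumes h: "fps_X*Q2 = fps_X*Q + (c1+c2)*S - (b1+b2)*P - \<rho>*(c1+c2)*(b1+b2)"
  shows "mat2 (P + (c1+c2)*\<rho>) Q2 (fps_X*\<rho>) (S - (b1+b2)*\<rho>) ** mat2 1 b2 0 fps_X
           = mat2 1 c2 0 fps_X ** mat2 (P + c1*\<rho>) (fps_X*Q + c1*S - (P + c1*\<rho>)*b1) \<rho> (S - \<rho>*b1)"
  unfolding mat2_mult mat2_eq
proof (intro conjI)
  show "(P + (c1 + c2) * \<rho>) * b2 + Q2 * fps_X = 1 * (fps_X * Q + c1 * S - (P + c1 * \<rho>) * b1) + c2 * (S - \<rho> * b1)"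
    using h by algebra
qed (simp_all add: algebra_simps)

lemma stepC2y:
  fixes P Q \<rho> S b1 c1 b2 c2 Q2 :: "complex fps"
  assumes h: "fps_X*Q2 = fps_X*Q + (c1+c2)*S - (b1+b2)*P - \<rho>*(c1+c2)*(b1+b2)"
  shows "mat2 (P + c1*\<rho>) (fps_X*Q + c1*S - (P + c1*\<rho>)*b1) \<rho> (S - \<rho>*b1) ** mat2 fps_X (-b2) 0 1
           = mat2 fps_X (-c2) 0 1 ** mat2 (P + (c1+c2)*\<rho>) Q2 (fps_X*\<rho>) (S - (b1+b2)*\<rho>)"
  unfolding mat2_mult mat2_eq by (simp add: h algebra_simps)

lemma det_chain:
  assumes "(A::Zmat) ** M = M' ** B" "det M = fps_X" "det M' = fps_X"
  shows "det A = det B"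
proof -
  have "det A * fps_X = fps_X * det B" using assms by (metis det_mul)
  then show ?thesis by (simp add: mult.commute)
qed

definition eqc :: "complex \<Rightarrow> complex \<Rightarrow> complex \<Rightarrow> complex \<Rightarrow> complex \<Rightarrow> bool" where
  "eqc p u r sg ta \<longleftrightarrow> sg*u - ta*p - sg*ta*r = 0"

lemma G:
  fixes ta tb tc sa sb sc :: complex
  assumes nz: "ta\<noteq>0" "tb\<noteq>0" "tc\<noteq>0" "sa\<noteq>0" "sb\<noteq>0" "sc\<noteq>0"
    and ds: "ta\<noteq>tb" "ta\<noteq>tc" "sa\<noteq>sb" "sa\<noteq>sc"
  shows "(\<exists>p u r. p\<noteq>0 \<and> u\<noteq>0 \<and> eqc p u r sa ta \<and> eqc p u r sb tb \<and> eqc p u r sc tc)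
     \<longleftrightarrow> sb*tc*(tb-ta)*(sc-sa) - sc*tb*(tc-ta)*(sb-sa) = 0" (is "?L \<longleftrightarrow> ?K = 0")
proof
  assume ?L
  then obtain p u r where s0: "u\<noteq>0" and ea: "sa*u - ta*p - sa*ta*r = 0"
    and eb: "sb*u - tb*p - sb*tb*r = 0" and ec: "sc*u - tc*p - sc*tc*r = 0"
    unfolding eqc_def by blast
  have h1: "u*(sa* sb*(tb-ta)) = p*(ta*tb*(sb-sa))" using ea eb by algebra
  have h2: "u*(sa* sc*(tc-ta)) = p*(ta*tc*(sc-sa))" using ea ec by algebra
  have "u*(sa*ta*?K) = 0" using h1 h2 by algebra
  then show "?K = 0" using s0 nz by simp
next
  assume K: "?K = 0"
  define p where "p = sa* sb*(tb-ta)"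
  define u where "u = ta*tb*(sb-sa)"
  define r where "r = (sa*u - ta*p)/(sa*ta)"
  have p0: "p \<noteq> 0" using nz ds unfolding p_def by simp
  have s0: "u \<noteq> 0" using nz ds unfolding u_def by simp
  have rr: "sa*ta*r = sa*u - ta*p" using nz unfolding r_def by simp
  have ea: "eqc p u r sa ta" unfolding eqc_def using rr by algebra
  have "sa*ta*(sb*u - tb*p - sb*tb*r) = 0" using rr unfolding p_def u_def by algebra
  then have eb: "eqc p u r sb tb" unfolding eqc_def using nz by simp
  have "sa*ta*(sc*u - tc*p - sc*tc*r) = 0" using rr K unfolding p_def u_def by algebra
  then have ec: "eqc p u r sc tc" unfolding eqc_def using nz by simp
  show ?L using p0 s0 ea eb ec by blast
qed

definition crit :: "complex \<Rightarrow> complex \<Rightarrow> complex \<Rightarrow> complex \<Rightarrow> complex \<Rightarrow> complex \<Rightarrow> complex \<Rightarrow> complex \<Rightarrow> bool" where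
  "crit B1 B3 B5 B7 C1 C3 C5 C7 \<longleftrightarrow> (\<exists>p u r. p\<noteq>0 \<and> u\<noteq>0 \<and> eqc p u r C1 B1 \<and> eqc p u r (C1+C3) (B1+B3)
     \<and> eqc p u r (C1+C3+C5) (B1+B3+B5) \<and> eqc p u r (C1+C3+C5+C7) (B1+B3+B5+B7))"

lemma nz_by: "(W::complex) \<noteq> 0 \<Longrightarrow> X = W \<Longrightarrow> X \<noteq> 0" by simp
lemma nz_byn: "(W::complex) \<noteq> 0 \<Longrightarrow> X = -W \<Longrightarrow> X \<noteq> 0" by simp
lemma ne_byn: "(W::complex) \<noteq> 0 \<Longrightarrow> Y - X = -W \<Longrightarrow> X \<noteq> Y" by auto
lemma ne_by: "(W::complex) \<noteq> 0 \<Longrightarrow> Y - X = W \<Longrightarrow> X \<noteq> Y" by auto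

lemma case1:
  fixes B1 B3 B5 B7 B9 C1 C3 C5 C7 C9 :: complex
  assumes Bnz: "B1\<noteq>0" "B3\<noteq>0" "B5\<noteq>0" "B7\<noteq>0" "B9\<noteq>0"
    and Bsum: "B1+B3+B5+B7+B9 = 0"
    and Bpz: "B1+B3 = 0"
    and Bpn: "B3+B5 \<noteq> 0" "B5+B7 \<noteq> 0" "B7+B9 \<noteq> 0" "B9+B1 \<noteq> 0"
  assumes Cnz: "C1\<noteq>0" "C3\<noteq>0" "C5\<noteq>0" "C7\<noteq>0" "C9\<noteq>0"
    and Csum: "C1+C3+C5+C7+C9 = 0"
    and Cpz: "C1+C3 = 0"
    and Cpn: "C3+C5 \<noteq> 0" "C5+C7 \<noteq> 0" "C7+C9 \<noteq> 0" "C9+C1 \<noteq> 0"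
  shows "crit B1 B3 B5 B7 C1 C3 C5 C7 \<longleftrightarrow> (B9+B1)*C1*B5*C7 - (C9+C1)*B1*C5*B7 = 0"
proof -
  have ex: "\<And>p u r. eqc p u r (C1+C3) (B1+B3)"
    unfolding eqc_def using Bsum Csum Bpz Cpz by (algebra | simp add: algebra_simps)
  have "crit B1 B3 B5 B7 C1 C3 C5 C7 \<longleftrightarrow> (\<exists>p u r. p\<noteq>0 \<and> u\<noteq>0 \<and> eqc p u r (C1) (B1) \<and> eqc p u r (C1+C3+C5) (B1+B3+B5) \<and> eqc p u r (C1+C3+C5+C7) (B1+B3+B5+B7))"
    unfolding crit_def using ex by auto
  also have "\<dots> \<longleftrightarrow> (C1+C3+C5)*(B1+B3+B5+B7)*((B1+B3+B5)-(B1))*((C1+C3+C5+C7)-(C1)) - (C1+C3+C5+C7)*(B1+B3+B5)*((B1+B3+B5+B7)-(B1))*((C1+C3+C5)-(C1)) = 0"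
  proof (rule G)
    show "B1 \<noteq> 0"
      using Bnz Cnz Bpn Cpn by simp
    show "B1+B3+B5 \<noteq> 0"
    proof (rule nz_byn[of "B7+B9"])
      show "B7+B9 \<noteq> 0" using Bnz Cnz Bpn Cpn by simp
      show "B1+B3+B5 = -(B7+B9)" using Bsum Csum Bpz Cpz by (algebra | simp add: algebra_simps)
    qed
    show "B1+B3+B5+B7 \<noteq> 0"
    proof (rule nz_byn[of "B9"])
      show "B9 \<noteq> 0" using Bnz Cnz Bpn Cpn by simp
      show "B1+B3+B5+B7 = -(B9)" using Bsum Csum Bpz Cpz by (algebra | simp add: algebra_simps)
    qed
    show "C1 \<noteq> 0"
      using Bnz Cnz Bpn Cpn by simp
    show "C1+C3+C5 \<noteq> 0"
    proof (rule nz_byn[of "C7+C9"])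
      show "C7+C9 \<noteq> 0" using Bnz Cnz Bpn Cpn by simp
      show "C1+C3+C5 = -(C7+C9)" using Bsum Csum Bpz Cpz by (algebra | simp add: algebra_simps)
    qed
    show "C1+C3+C5+C7 \<noteq> 0"
    proof (rule nz_byn[of "C9"])
      show "C9 \<noteq> 0" using Bnz Cnz Bpn Cpn by simp
      show "C1+C3+C5+C7 = -(C9)" using Bsum Csum Bpz Cpz by (algebra | simp add: algebra_simps)
    qed
    show "B1 \<noteq> B1+B3+B5"
    proof (rule ne_by[of "B3+B5"])
      show "B3+B5 \<noteq> 0" using Bnz Cnz Bpn Cpn by simp
      show "B1+B3+B5 - (B1) = (B3+B5)" using Bsum Csum Bpz Cpz by (algebra | simp add: algebra_simps)
    qed
    show "B1 \<noteq> B1+B3+B5+B7"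
    proof (rule ne_byn[of "B9+B1"])
      show "B9+B1 \<noteq> 0" using Bnz Cnz Bpn Cpn by simp
      show "B1+B3+B5+B7 - (B1) = -(B9+B1)" using Bsum Csum Bpz Cpz by (algebra | simp add: algebra_simps)
    qed
    show "C1 \<noteq> C1+C3+C5"
    proof (rule ne_by[of "C3+C5"])
      show "C3+C5 \<noteq> 0" using Bnz Cnz Bpn Cpn by simp
      show "C1+C3+C5 - (C1) = (C3+C5)" using Bsum Csum Bpz Cpz by (algebra | simp add: algebra_simps)
    qed
    show "C1 \<noteq> C1+C3+C5+C7"
    proof (rule ne_byn[of "C9+C1"])
      show "C9+C1 \<noteq> 0" using Bnz Cnz Bpn Cpn by simp
      show "C1+C3+C5+C7 - (C1) = -(C9+C1)" using Bsum Csum Bpz Cpz by (algebra | simp add: algebra_simps)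
    qed
  qed
  also have "\<dots> \<longleftrightarrow> (B9+B1)*C1*B5*C7 - (C9+C1)*B1*C5*B7 = 0"
  proof -
    have "(C1+C3+C5)*(B1+B3+B5+B7)*((B1+B3+B5)-(B1))*((C1+C3+C5+C7)-(C1)) - (C1+C3+C5+C7)*(B1+B3+B5)*((B1+B3+B5+B7)-(B1))*((C1+C3+C5)-(C1)) = -((B9+B1)*C1*B5*C7 - (C9+C1)*B1*C5*B7)"
      using Bsum Csum Bpz Cpz by (algebra | simp add: algebra_simps)
    then show ?thesis by (simp only: neg_equal_0_iff_equal)
  qed
  finally show ?thesis .
qed

lemma case3:
  fixes B1 B3 B5 B7 B9 C1 C3 C5 C7 C9 :: complex
  assumes Bnz: "B1\<noteq>0" "B3\<noteq>0" "B5\<noteq>0" "B7\<noteq>0" "B9\<noteq>0"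
    and Bsum: "B1+B3+B5+B7+B9 = 0"
    and Bpz: "B3+B5 = 0"
    and Bpn: "B1+B3 \<noteq> 0" "B5+B7 \<noteq> 0" "B7+B9 \<noteq> 0" "B9+B1 \<noteq> 0"
  assumes Cnz: "C1\<noteq>0" "C3\<noteq>0" "C5\<noteq>0" "C7\<noteq>0" "C9\<noteq>0"
    and Csum: "C1+C3+C5+C7+C9 = 0"
    and Cpz: "C3+C5 = 0"
    and Cpn: "C1+C3 \<noteq> 0" "C5+C7 \<noteq> 0" "C7+C9 \<noteq> 0" "C9+C1 \<noteq> 0"
  shows "crit B1 B3 B5 B7 C1 C3 C5 C7 \<longleftrightarrow> (B1+B3)*C3*B7*C9 - (C1+C3)*B3*C7*B9 = 0"
proof -
  have ex: "\<And>p u r. eqc p u r (C1+C3+C5) (B1+B3+B5) = eqc p u r (C1) (B1)"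
  proof -
    have "B1+B3+B5 = B1" "C1+C3+C5 = C1" using Bsum Csum Bpz Cpz by (algebra | simp add: algebra_simps)+
    then show "\<And>p u r. ?thesis p u r" by (simp only:)
  qed
  have "crit B1 B3 B5 B7 C1 C3 C5 C7 \<longleftrightarrow> (\<exists>p u r. p\<noteq>0 \<and> u\<noteq>0 \<and> eqc p u r (C1) (B1) \<and> eqc p u r (C1+C3) (B1+B3) \<and> eqc p u r (C1+C3+C5+C7) (B1+B3+B5+B7))"
    unfolding crit_def using ex by auto
  also have "\<dots> \<longleftrightarrow> (C1+C3)*(B1+B3+B5+B7)*((B1+B3)-(B1))*((C1+C3+C5+C7)-(C1)) - (C1+C3+C5+C7)*(B1+B3)*((B1+B3+B5+B7)-(B1))*((C1+C3)-(C1)) = 0"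
  proof (rule G)
    show "B1 \<noteq> 0"
      using Bnz Cnz Bpn Cpn by simp
    show "B1+B3 \<noteq> 0"
      using Bnz Cnz Bpn Cpn by simp
    show "B1+B3+B5+B7 \<noteq> 0"
    proof (rule nz_byn[of "B9"])
      show "B9 \<noteq> 0" using Bnz Cnz Bpn Cpn by simp
      show "B1+B3+B5+B7 = -(B9)" using Bsum Csum Bpz Cpz by (algebra | simp add: algebra_simps)
    qed
    show "C1 \<noteq> 0"
      using Bnz Cnz Bpn Cpn by simp
    show "C1+C3 \<noteq> 0"
      using Bnz Cnz Bpn Cpn by simp
    show "C1+C3+C5+C7 \<noteq> 0"
    proof (rule nz_byn[of "C9"])
      show "C9 \<noteq> 0" using Bnz Cnz Bpn Cpn by simp
      show "C1+C3+C5+C7 = -(C9)" using Bsum Csum Bpz Cpz by (algebra | simp add: algebra_simps)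
    qed
    show "B1 \<noteq> B1+B3"
    proof (rule ne_by[of "B3"])
      show "B3 \<noteq> 0" using Bnz Cnz Bpn Cpn by simp
      show "B1+B3 - (B1) = (B3)" using Bsum Csum Bpz Cpz by (algebra | simp add: algebra_simps)
    qed
    show "B1 \<noteq> B1+B3+B5+B7"
    proof (rule ne_byn[of "B9+B1"])
      show "B9+B1 \<noteq> 0" using Bnz Cnz Bpn Cpn by simp
      show "B1+B3+B5+B7 - (B1) = -(B9+B1)" using Bsum Csum Bpz Cpz by (algebra | simp add: algebra_simps)
    qed
    show "C1 \<noteq> C1+C3"
    proof (rule ne_by[of "C3"])
      show "C3 \<noteq> 0" using Bnz Cnz Bpn Cpn by simp
      show "C1+C3 - (C1) = (C3)" using Bsum Csum Bpz Cpz by (algebra | simp add: algebra_simps)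
    qed
    show "C1 \<noteq> C1+C3+C5+C7"
    proof (rule ne_byn[of "C9+C1"])
      show "C9+C1 \<noteq> 0" using Bnz Cnz Bpn Cpn by simp
      show "C1+C3+C5+C7 - (C1) = -(C9+C1)" using Bsum Csum Bpz Cpz by (algebra | simp add: algebra_simps)
    qed
  qed
  also have "\<dots> \<longleftrightarrow> (B1+B3)*C3*B7*C9 - (C1+C3)*B3*C7*B9 = 0"
  proof -
    have "(C1+C3)*(B1+B3+B5+B7)*((B1+B3)-(B1))*((C1+C3+C5+C7)-(C1)) - (C1+C3+C5+C7)*(B1+B3)*((B1+B3+B5+B7)-(B1))*((C1+C3)-(C1)) = ((B1+B3)*C3*B7*C9 - (C1+C3)*B3*C7*B9)"
      using Bsum Csum Bpz Cpz by (algebra | simp add: algebra_simps)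
    then show ?thesis by (simp only: neg_equal_0_iff_equal)
  qed
  finally show ?thesis .
qed

lemma case5:
  fixes B1 B3 B5 B7 B9 C1 C3 C5 C7 C9 :: complex
  assumes Bnz: "B1\<noteq>0" "B3\<noteq>0" "B5\<noteq>0" "B7\<noteq>0" "B9\<noteq>0"
    and Bsum: "B1+B3+B5+B7+B9 = 0"
    and Bpz: "B5+B7 = 0"
    and Bpn: "B1+B3 \<noteq> 0" "B3+B5 \<noteq> 0" "B7+B9 \<noteq> 0" "B9+B1 \<noteq> 0"
  assumes Cnz: "C1\<noteq>0" "C3\<noteq>0" "C5\<noteq>0" "C7\<noteq>0" "C9\<noteq>0"
    and Csum: "C1+C3+C5+C7+C9 = 0"
    and Cpz: "C5+C7 = 0"
    and Cpn: "C1+C3 \<noteq> 0" "C3+C5 \<noteq> 0" "C7+C9 \<noteq> 0" "C9+C1 \<noteq> 0"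
  shows "crit B1 B3 B5 B7 C1 C3 C5 C7 \<longleftrightarrow> (B3+B5)*C5*B9*C1 - (C3+C5)*B5*C9*B1 = 0"
proof -
  have ex: "\<And>p u r. eqc p u r (C1+C3+C5+C7) (B1+B3+B5+B7) = eqc p u r (C1+C3) (B1+B3)"
  proof -
    have "B1+B3+B5+B7 = B1+B3" "C1+C3+C5+C7 = C1+C3" using Bsum Csum Bpz Cpz by (algebra | simp add: algebra_simps)+
    then show "\<And>p u r. ?thesis p u r" by (simp only:)
  qed
  have "crit B1 B3 B5 B7 C1 C3 C5 C7 \<longleftrightarrow> (\<exists>p u r. p\<noteq>0 \<and> u\<noteq>0 \<and> eqc p u r (C1) (B1) \<and> eqc p u r (C1+C3) (B1+B3) \<and> eqc p u r (C1+C3+C5) (B1+B3+B5))"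
    unfolding crit_def using ex by auto
  also have "\<dots> \<longleftrightarrow> (C1+C3)*(B1+B3+B5)*((B1+B3)-(B1))*((C1+C3+C5)-(C1)) - (C1+C3+C5)*(B1+B3)*((B1+B3+B5)-(B1))*((C1+C3)-(C1)) = 0"
  proof (rule G)
    show "B1 \<noteq> 0"
      using Bnz Cnz Bpn Cpn by simp
    show "B1+B3 \<noteq> 0"
      using Bnz Cnz Bpn Cpn by simp
    show "B1+B3+B5 \<noteq> 0"
    proof (rule nz_byn[of "B7+B9"])
      show "B7+B9 \<noteq> 0" using Bnz Cnz Bpn Cpn by simp
      show "B1+B3+B5 = -(B7+B9)" using Bsum Csum Bpz Cpz by (algebra | simp add: algebra_simps)
    qed
    show "C1 \<noteq> 0"
      using Bnz Cnz Bpn Cpn by simp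
    show "C1+C3 \<noteq> 0"
      using Bnz Cnz Bpn Cpn by simp
    show "C1+C3+C5 \<noteq> 0"
    proof (rule nz_byn[of "C7+C9"])
      show "C7+C9 \<noteq> 0" using Bnz Cnz Bpn Cpn by simp
      show "C1+C3+C5 = -(C7+C9)" using Bsum Csum Bpz Cpz by (algebra | simp add: algebra_simps)
    qed
    show "B1 \<noteq> B1+B3"
    proof (rule ne_by[of "B3"])
      show "B3 \<noteq> 0" using Bnz Cnz Bpn Cpn by simp
      show "B1+B3 - (B1) = (B3)" using Bsum Csum Bpz Cpz by (algebra | simp add: algebra_simps)
    qed
    show "B1 \<noteq> B1+B3+B5"
    proof (rule ne_by[of "B3+B5"])
      show "B3+B5 \<noteq> 0" using Bnz Cnz Bpn Cpn by simp
      show "B1+B3+B5 - (B1) = (B3+B5)" using Bsum Csum Bpz Cpz by (algebra | simp add: algebra_simps)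
    qed
    show "C1 \<noteq> C1+C3"
    proof (rule ne_by[of "C3"])
      show "C3 \<noteq> 0" using Bnz Cnz Bpn Cpn by simp
      show "C1+C3 - (C1) = (C3)" using Bsum Csum Bpz Cpz by (algebra | simp add: algebra_simps)
    qed
    show "C1 \<noteq> C1+C3+C5"
    proof (rule ne_by[of "C3+C5"])
      show "C3+C5 \<noteq> 0" using Bnz Cnz Bpn Cpn by simp
      show "C1+C3+C5 - (C1) = (C3+C5)" using Bsum Csum Bpz Cpz by (algebra | simp add: algebra_simps)
    qed
  qed
  also have "\<dots> \<longleftrightarrow> (B3+B5)*C5*B9*C1 - (C3+C5)*B5*C9*B1 = 0"
  proof -
    have "(C1+C3)*(B1+B3+B5)*((B1+B3)-(B1))*((C1+C3+C5)-(C1)) - (C1+C3+C5)*(B1+B3)*((B1+B3+B5)-(B1))*((C1+C3)-(C1)) = -((B3+B5)*C5*B9*C1 - (C3+C5)*B5*C9*B1)"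
      using Bsum Csum Bpz Cpz by (algebra | simp add: algebra_simps)
    then show ?thesis by (simp only: neg_equal_0_iff_equal)
  qed
  finally show ?thesis .
qed

lemma case7:
  fixes B1 B3 B5 B7 B9 C1 C3 C5 C7 C9 :: complex
  assumes Bnz: "B1\<noteq>0" "B3\<noteq>0" "B5\<noteq>0" "B7\<noteq>0" "B9\<noteq>0"
    and Bsum: "B1+B3+B5+B7+B9 = 0"
    and Bpz: "B7+B9 = 0"
    and Bpn: "B1+B3 \<noteq> 0" "B3+B5 \<noteq> 0" "B5+B7 \<noteq> 0" "B9+B1 \<noteq> 0"
  assumes Cnz: "C1\<noteq>0" "C3\<noteq>0" "C5\<noteq>0" "C7\<noteq>0" "C9\<noteq>0"
    and Csum: "C1+C3+C5+C7+C9 = 0"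
    and Cpz: "C7+C9 = 0"
    and Cpn: "C1+C3 \<noteq> 0" "C3+C5 \<noteq> 0" "C5+C7 \<noteq> 0" "C9+C1 \<noteq> 0"
  shows "crit B1 B3 B5 B7 C1 C3 C5 C7 \<longleftrightarrow> (B5+B7)*C7*B1*C3 - (C5+C7)*B7*C1*B3 = 0"
proof -
  have ex: "\<And>p u r. eqc p u r (C1+C3+C5) (B1+B3+B5)"
    unfolding eqc_def using Bsum Csum Bpz Cpz by (algebra | simp add: algebra_simps)
  have "crit B1 B3 B5 B7 C1 C3 C5 C7 \<longleftrightarrow> (\<exists>p u r. p\<noteq>0 \<and> u\<noteq>0 \<and> eqc p u r (C1) (B1) \<and> eqc p u r (C1+C3) (B1+B3) \<and> eqc p u r (C1+C3+C5+C7) (B1+B3+B5+B7))"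
    unfolding crit_def using ex by auto
  also have "\<dots> \<longleftrightarrow> (C1+C3)*(B1+B3+B5+B7)*((B1+B3)-(B1))*((C1+C3+C5+C7)-(C1)) - (C1+C3+C5+C7)*(B1+B3)*((B1+B3+B5+B7)-(B1))*((C1+C3)-(C1)) = 0"
  proof (rule G)
    show "B1 \<noteq> 0"
      using Bnz Cnz Bpn Cpn by simp
    show "B1+B3 \<noteq> 0"
      using Bnz Cnz Bpn Cpn by simp
    show "B1+B3+B5+B7 \<noteq> 0"
    proof (rule nz_byn[of "B9"])
      show "B9 \<noteq> 0" using Bnz Cnz Bpn Cpn by simp
      show "B1+B3+B5+B7 = -(B9)" using Bsum Csum Bpz Cpz by (algebra | simp add: algebra_simps)
    qed
    show "C1 \<noteq> 0"
      using Bnz Cnz Bpn Cpn by simp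
    show "C1+C3 \<noteq> 0"
      using Bnz Cnz Bpn Cpn by simp
    show "C1+C3+C5+C7 \<noteq> 0"
    proof (rule nz_byn[of "C9"])
      show "C9 \<noteq> 0" using Bnz Cnz Bpn Cpn by simp
      show "C1+C3+C5+C7 = -(C9)" using Bsum Csum Bpz Cpz by (algebra | simp add: algebra_simps)
    qed
    show "B1 \<noteq> B1+B3"
    proof (rule ne_by[of "B3"])
      show "B3 \<noteq> 0" using Bnz Cnz Bpn Cpn by simp
      show "B1+B3 - (B1) = (B3)" using Bsum Csum Bpz Cpz by (algebra | simp add: algebra_simps)
    qed
    show "B1 \<noteq> B1+B3+B5+B7"
    proof (rule ne_byn[of "B9+B1"])
      show "B9+B1 \<noteq> 0" using Bnz Cnz Bpn Cpn by simp
      show "B1+B3+B5+B7 - (B1) = -(B9+B1)" using Bsum Csum Bpz Cpz by (algebra | simp add: algebra_simps)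
    qed
    show "C1 \<noteq> C1+C3"
    proof (rule ne_by[of "C3"])
      show "C3 \<noteq> 0" using Bnz Cnz Bpn Cpn by simp
      show "C1+C3 - (C1) = (C3)" using Bsum Csum Bpz Cpz by (algebra | simp add: algebra_simps)
    qed
    show "C1 \<noteq> C1+C3+C5+C7"
    proof (rule ne_byn[of "C9+C1"])
      show "C9+C1 \<noteq> 0" using Bnz Cnz Bpn Cpn by simp
      show "C1+C3+C5+C7 - (C1) = -(C9+C1)" using Bsum Csum Bpz Cpz by (algebra | simp add: algebra_simps)
    qed
  qed
  also have "\<dots> \<longleftrightarrow> (B5+B7)*C7*B1*C3 - (C5+C7)*B7*C1*B3 = 0"
  proof -
    have "(C1+C3)*(B1+B3+B5+B7)*((B1+B3)-(B1))*((C1+C3+C5+C7)-(C1)) - (C1+C3+C5+C7)*(B1+B3)*((B1+B3+B5+B7)-(B1))*((C1+C3)-(C1)) = -((B5+B7)*C7*B1*C3 - (C5+C7)*B7*C1*B3)"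
      using Bsum Csum Bpz Cpz by (algebra | simp add: algebra_simps)
    then show ?thesis by (simp only: neg_equal_0_iff_equal)
  qed
  finally show ?thesis .
qed

lemma case9:
  fixes B1 B3 B5 B7 B9 C1 C3 C5 C7 C9 :: complex
  assumes Bnz: "B1\<noteq>0" "B3\<noteq>0" "B5\<noteq>0" "B7\<noteq>0" "B9\<noteq>0"
    and Bsum: "B1+B3+B5+B7+B9 = 0"
    and Bpz: "B9+B1 = 0"
    and Bpn: "B1+B3 \<noteq> 0" "B3+B5 \<noteq> 0" "B5+B7 \<noteq> 0" "B7+B9 \<noteq> 0"
  assumes Cnz: "C1\<noteq>0" "C3\<noteq>0" "C5\<noteq>0" "C7\<noteq>0" "C9\<noteq>0"
    and Csum: "C1+C3+C5+C7+C9 = 0"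
    and Cpz: "C9+C1 = 0"
    and Cpn: "C1+C3 \<noteq> 0" "C3+C5 \<noteq> 0" "C5+C7 \<noteq> 0" "C7+C9 \<noteq> 0"
  shows "crit B1 B3 B5 B7 C1 C3 C5 C7 \<longleftrightarrow> (B7+B9)*C9*B3*C5 - (C7+C9)*B9*C3*B5 = 0"
proof -
  have ex: "\<And>p u r. eqc p u r (C1+C3+C5+C7) (B1+B3+B5+B7) = eqc p u r (C1) (B1)"
  proof -
    have "B1+B3+B5+B7 = B1" "C1+C3+C5+C7 = C1" using Bsum Csum Bpz Cpz by (algebra | simp add: algebra_simps)+
    then show "\<And>p u r. ?thesis p u r" by (simp only:)
  qed
  have "crit B1 B3 B5 B7 C1 C3 C5 C7 \<longleftrightarrow> (\<exists>p u r. p\<noteq>0 \<and> u\<noteq>0 \<and> eqc p u r (C1) (B1) \<and> eqc p u r (C1+C3) (B1+B3) \<and> eqc p u r (C1+C3+C5) (B1+B3+B5))"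
    unfolding crit_def using ex by auto
  also have "\<dots> \<longleftrightarrow> (C1+C3)*(B1+B3+B5)*((B1+B3)-(B1))*((C1+C3+C5)-(C1)) - (C1+C3+C5)*(B1+B3)*((B1+B3+B5)-(B1))*((C1+C3)-(C1)) = 0"
  proof (rule G)
    show "B1 \<noteq> 0"
      using Bnz Cnz Bpn Cpn by simp
    show "B1+B3 \<noteq> 0"
      using Bnz Cnz Bpn Cpn by simp
    show "B1+B3+B5 \<noteq> 0"
    proof (rule nz_byn[of "B7+B9"])
      show "B7+B9 \<noteq> 0" using Bnz Cnz Bpn Cpn by simp
      show "B1+B3+B5 = -(B7+B9)" using Bsum Csum Bpz Cpz by (algebra | simp add: algebra_simps)
    qed
    show "C1 \<noteq> 0"
      using Bnz Cnz Bpn Cpn by simp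
    show "C1+C3 \<noteq> 0"
      using Bnz Cnz Bpn Cpn by simp
    show "C1+C3+C5 \<noteq> 0"
    proof (rule nz_byn[of "C7+C9"])
      show "C7+C9 \<noteq> 0" using Bnz Cnz Bpn Cpn by simp
      show "C1+C3+C5 = -(C7+C9)" using Bsum Csum Bpz Cpz by (algebra | simp add: algebra_simps)
    qed
    show "B1 \<noteq> B1+B3"
    proof (rule ne_by[of "B3"])
      show "B3 \<noteq> 0" using Bnz Cnz Bpn Cpn by simp
      show "B1+B3 - (B1) = (B3)" using Bsum Csum Bpz Cpz by (algebra | simp add: algebra_simps)
    qed
    show "B1 \<noteq> B1+B3+B5"
    proof (rule ne_by[of "B3+B5"])
      show "B3+B5 \<noteq> 0" using Bnz Cnz Bpn Cpn by simp
      show "B1+B3+B5 - (B1) = (B3+B5)" using Bsum Csum Bpz Cpz by (algebra | simp add: algebra_simps)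
    qed
    show "C1 \<noteq> C1+C3"
    proof (rule ne_by[of "C3"])
      show "C3 \<noteq> 0" using Bnz Cnz Bpn Cpn by simp
      show "C1+C3 - (C1) = (C3)" using Bsum Csum Bpz Cpz by (algebra | simp add: algebra_simps)
    qed
    show "C1 \<noteq> C1+C3+C5"
    proof (rule ne_by[of "C3+C5"])
      show "C3+C5 \<noteq> 0" using Bnz Cnz Bpn Cpn by simp
      show "C1+C3+C5 - (C1) = (C3+C5)" using Bsum Csum Bpz Cpz by (algebra | simp add: algebra_simps)
    qed
  qed
  also have "\<dots> \<longleftrightarrow> (B7+B9)*C9*B3*C5 - (C7+C9)*B9*C3*B5 = 0"
  proof -
    have "(C1+C3)*(B1+B3+B5)*((B1+B3)-(B1))*((C1+C3+C5)-(C1)) - (C1+C3+C5)*(B1+B3)*((B1+B3+B5)-(B1))*((C1+C3)-(C1)) = ((B7+B9)*C9*B3*C5 - (C7+C9)*B9*C3*B5)"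
      using Bsum Csum Bpz Cpz by (algebra | simp add: algebra_simps)
    then show ?thesis by (simp only: neg_equal_0_iff_equal)
  qed
  finally show ?thesis .
qed

lemma inv_det: "fps_nth (det (A::Zmat)) 0 \<noteq> 0 \<Longrightarrow> invertible A"
  by (metis det_mat2 inv_mat2 mat2_eta)

lemma det_xo: "det (mat2 fps_X a 0 1) = fps_X" and det_xe: "det (mat2 1 a 0 fps_X) = fps_X"
  by (simp_all add: det_mat2)

lemma stepD':
  fixes A A1 A2 :: Zmat
  assumes e1: "A1 ** mat2 fps_X b1 0 1 = mat2 fps_X c1 0 1 ** A"
    and e2: "A2 ** mat2 1 b2 0 fps_X = mat2 1 c2 0 fps_X ** A1"
  shows "A$2$1 = fps_X*A1$2$1" "A2$2$1 = fps_X*A1$2$1" "A2$1$1 = A$1$1 + (c1+c2)*A1$2$1"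
    "A2$2$2 = A$2$2 - (b1+b2)*A1$2$1"
    "fps_X*A2$1$2 = fps_X*A$1$2 + (c1+c2)*A$2$2 - (b1+b2)*A$1$1 - A1$2$1*(c1+c2)*(b1+b2)"
proof -
  obtain P Q R S where A: "A = mat2 P Q R S" by (metis mat2_eta)
  obtain P1 Q1 R1 S1 where A1: "A1 = mat2 P1 Q1 R1 S1" by (metis mat2_eta)
  obtain P2 Q2 R2 S2 where A2: "A2 = mat2 P2 Q2 R2 S2" by (metis mat2_eta)
  note st = stepD[OF e1[unfolded A A1] e2[unfolded A1 A2]]
  show "A$2$1 = fps_X*A1$2$1" "A2$2$1 = fps_X*A1$2$1" "A2$1$1 = A$1$1 + (c1+c2)*A1$2$1"
    "A2$2$2 = A$2$2 - (b1+b2)*A1$2$1"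
    "fps_X*A2$1$2 = fps_X*A$1$2 + (c1+c2)*A$2$2 - (b1+b2)*A$1$1 - A1$2$1*(c1+c2)*(b1+b2)"
    using st unfolding A A1 A2 mat2_nth by simp_all
qed

lemma xmap_o: "odd j \<Longrightarrow> xmap b j = mat2 fps_X (cyc b j) 0 1" by (simp add: xmap_def)
lemma xmap_e: "even j \<Longrightarrow> xmap b j = mat2 1 (cyc b j) 0 fps_X" by (simp add: xmap_def)
lemma ymap_o: "odd j \<Longrightarrow> ymap b j = mat2 1 (- cyc b j) 0 fps_X" by (simp add: ymap_def)
lemma ymap_e: "even j \<Longrightarrow> ymap b j = mat2 fps_X (- cyc b j) 0 1" by (simp add: ymap_def)

lemma nth0_eq: "(f::complex fps) = g \<Longrightarrow> fps_nth f 0 = fps_nth g 0" by simp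

lemma part1a:
  fixes b c :: "int \<Rightarrow> complex fps"
  assumes "Miso b c"
  shows "crit (fps_nth (Bsum b 1) 0) (fps_nth (Bsum b 3) 0) (fps_nth (Bsum b 5) 0) (fps_nth (Bsum b 7) 0)
              (fps_nth (Bsum c 1) 0) (fps_nth (Bsum c 3) 0) (fps_nth (Bsum c 5) 0) (fps_nth (Bsum c 7) 0)"
proof -
  obtain \<phi> :: "int \<Rightarrow> Zmat" where inv: "\<forall>i \<in> {0..9}. invertible (\<phi> i)"
    and eq: "\<forall>j \<in> {1..10}. \<phi> (j mod 10) ** xmap b j = xmap c j ** \<phi> (j - 1)"
    using assms unfolding Miso_def by blast
  have e: "\<phi> j ** xmap b j = xmap c j ** \<phi> (j - 1)" if "j \<in> {1..8}" for j
  proof -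
    have "j mod 10 = j" using that by simp
    moreover have "j \<in> {1..10}" using that by simp
    ultimately show ?thesis using eq by metis
  qed
  have e1: "\<phi> 1 ** mat2 fps_X (cyc b 1) 0 1 = mat2 fps_X (cyc c 1) 0 1 ** \<phi> 0"
    using e[of 1] by (simp add: xmap_o)
  have e2: "\<phi> 2 ** mat2 1 (cyc b 2) 0 fps_X = mat2 1 (cyc c 2) 0 fps_X ** \<phi> 1"
    using e[of 2] by (simp add: xmap_e)
  have e3: "\<phi> 3 ** mat2 fps_X (cyc b 3) 0 1 = mat2 fps_X (cyc c 3) 0 1 ** \<phi> 2"
    using e[of 3] by (simp add: xmap_o)
  have e4: "\<phi> 4 ** mat2 1 (cyc b 4) 0 fps_X = mat2 1 (cyc c 4) 0 fps_X ** \<phi> 3"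
    using e[of 4] by (simp add: xmap_e)
  have e5: "\<phi> 5 ** mat2 fps_X (cyc b 5) 0 1 = mat2 fps_X (cyc c 5) 0 1 ** \<phi> 4"
    using e[of 5] by (simp add: xmap_o)
  have e6: "\<phi> 6 ** mat2 1 (cyc b 6) 0 fps_X = mat2 1 (cyc c 6) 0 fps_X ** \<phi> 5"
    using e[of 6] by (simp add: xmap_e)
  have e7: "\<phi> 7 ** mat2 fps_X (cyc b 7) 0 1 = mat2 fps_X (cyc c 7) 0 1 ** \<phi> 6"
    using e[of 7] by (simp add: xmap_o)
  have e8: "\<phi> 8 ** mat2 1 (cyc b 8) 0 fps_X = mat2 1 (cyc c 8) 0 fps_X ** \<phi> 7"
    using e[of 8] by (simp add: xmap_e)
  note s0 = stepD'[OF e1 e2] and s1 = stepD'[OF e3 e4] and s2 = stepD'[OF e5 e6] and s3 = stepD'[OF e7 e8]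
  have Bs: "Bsum x (j::int) = cyc x j + cyc x (j+1)" for x j by (simp add: Bsum_def)
  define p where "p = fps_nth (\<phi> 0 $1$1) 0"
  define sv where "sv = fps_nth (\<phi> 0 $2$2) 0"
  define r where "r = fps_nth (\<phi> 1 $2$1) 0"
  have r3: "\<phi> 3 $2$1 = \<phi> 1 $2$1" using s0(2) s1(1) by simp
  have r5: "\<phi> 5 $2$1 = \<phi> 1 $2$1" using s1(2) s2(1) r3 by simp
  have r7: "\<phi> 7 $2$1 = \<phi> 1 $2$1" using s2(2) s3(1) r5 by simp
  define g1 where "g1 = fps_nth (Bsum c 1) 0"
  define g3 where "g3 = fps_nth (Bsum c 3) 0"
  define g5 where "g5 = fps_nth (Bsum c 5) 0"
  define g7 where "g7 = fps_nth (Bsum c 7) 0"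
  define b1 where "b1 = fps_nth (Bsum b 1) 0"
  define b3 where "b3 = fps_nth (Bsum b 3) 0"
  define b5 where "b5 = fps_nth (Bsum b 5) 0"
  define b7 where "b7 = fps_nth (Bsum b 7) 0"
  have P2: "fps_nth (\<phi> 2 $1$1) 0 = p + g1*r" using nth0_eq[OF s0(3)] by (simp add: p_def r_def g1_def Bs)
  have S2: "fps_nth (\<phi> 2 $2$2) 0 = sv - b1*r" using nth0_eq[OF s0(4)] by (simp add: sv_def r_def b1_def Bs)
  have P4: "fps_nth (\<phi> 4 $1$1) 0 = p + g1*r + g3*r" using nth0_eq[OF s1(3)] P2 r3 by (simp add: r_def g3_def Bs)
  have S4: "fps_nth (\<phi> 4 $2$2) 0 = sv - b1*r - b3*r" using nth0_eq[OF s1(4)] S2 r3 by (simp add: r_def b3_def Bs)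
  have P6: "fps_nth (\<phi> 6 $1$1) 0 = p + g1*r + g3*r + g5*r" using nth0_eq[OF s2(3)] P4 r5 by (simp add: r_def g5_def Bs)
  have S6: "fps_nth (\<phi> 6 $2$2) 0 = sv - b1*r - b3*r - b5*r" using nth0_eq[OF s2(4)] S4 r5 by (simp add: r_def b5_def Bs)
  have q0: "g1* sv - b1*p - r*g1*b1 = 0" using nth0_eq[OF s0(5)]
    by (simp add: p_def sv_def r_def g1_def b1_def Bs)
  have q1: "g3*(sv - b1*r) - b3*(p + g1*r) - r*g3*b3 = 0" using nth0_eq[OF s1(5)] P2 S2 r3
    by (simp add: r_def g3_def b3_def Bs)
  have q2: "g5*(sv - b1*r - b3*r) - b5*(p + g1*r + g3*r) - r*g5*b5 = 0" using nth0_eq[OF s2(5)] P4 S4 r5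
    by (simp add: r_def g5_def b5_def Bs)
  have q3: "g7*(sv - b1*r - b3*r - b5*r) - b7*(p + g1*r + g3*r + g5*r) - r*g7*b7 = 0"
    using nth0_eq[OF s3(5)] P6 S6 r7
    by (simp add: r_def g7_def b7_def Bs)
  have dt: "fps_nth (det (\<phi> 0)) 0 \<noteq> 0" using inv invertible_det0 by auto
  have "fps_nth (det (\<phi> 0)) 0 = p * sv" using s0(1)
    by (simp add: det_2 p_def sv_def)
  with dt have ps: "p \<noteq> 0" "sv \<noteq> 0" by auto
  have "eqc p sv r g1 b1" unfolding eqc_def using q0 by algebra
  moreover have "eqc p sv r (g1+g3) (b1+b3)" unfolding eqc_def using q0 q1 by algebra
  moreover have "eqc p sv r (g1+g3+g5) (b1+b3+b5)" unfolding eqc_def using q0 q1 q2 by algebra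
  moreover have "eqc p sv r (g1+g3+g5+g7) (b1+b3+b5+b7)" unfolding eqc_def using q0 q1 q2 q3 by algebra
  ultimately show ?thesis unfolding crit_def using ps
    by (simp only: g1_def[symmetric] g3_def[symmetric] g5_def[symmetric] g7_def[symmetric]
      b1_def[symmetric] b3_def[symmetric] b5_def[symmetric] b7_def[symmetric]) blast
qed

lemma stepAll:
  fixes P Q U \<rho> b1 c1 b2 c2 Cs Bs P' Q' U' :: "complex fps" and Om :: Zmat
  assumes hc: "Cs = c1 + c2" and hb: "Bs = b1 + b2"
    and hP: "P' = P + Cs*\<rho>" and hU: "U' = U - Bs*\<rho>"
    and hQ: "fps_X*Q' = fps_X*Q + Cs*U - Bs*P - \<rho>*Cs*Bs"
    and hO: "Om = mat2 (P + c1*\<rho>) (fps_X*Q + c1*U - (P + c1*\<rho>)*b1) \<rho> (U - \<rho>*b1)"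
  shows "Om ** mat2 fps_X b1 0 1 = mat2 fps_X c1 0 1 ** mat2 P Q (fps_X*\<rho>) U"
    "mat2 P Q (fps_X*\<rho>) U ** mat2 1 (-b1) 0 fps_X = mat2 1 (-c1) 0 fps_X ** Om"
    "mat2 P' Q' (fps_X*\<rho>) U' ** mat2 1 b2 0 fps_X = mat2 1 c2 0 fps_X ** Om"
    "Om ** mat2 fps_X (-b2) 0 1 = mat2 fps_X (-c2) 0 1 ** mat2 P' Q' (fps_X*\<rho>) U'"
proof -
  have q: "fps_X*Q' = fps_X*Q + (c1+c2)*U - (b1+b2)*P - \<rho>*(c1+c2)*(b1+b2)"
    using hQ hc hb by simp
  show "Om ** mat2 fps_X b1 0 1 = mat2 fps_X c1 0 1 ** mat2 P Q (fps_X*\<rho>) U"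
    unfolding hO by (rule stepC1)
  show "mat2 P Q (fps_X*\<rho>) U ** mat2 1 (-b1) 0 fps_X = mat2 1 (-c1) 0 fps_X ** Om"
    unfolding hO by (rule stepC1y)
  show "mat2 P' Q' (fps_X*\<rho>) U' ** mat2 1 b2 0 fps_X = mat2 1 c2 0 fps_X ** Om"
    unfolding hO hP hU hc hb by (rule stepC2[OF q])
  show "Om ** mat2 fps_X (-b2) 0 1 = mat2 fps_X (-c2) 0 1 ** mat2 P' Q' (fps_X*\<rho>) U'"
    unfolding hO hP hU hc hb by (rule stepC2y[OF q])
qed

lemma exQ:
  fixes F Q :: "complex fps"
  assumes "fps_nth F 0 = 0" shows "\<exists>Q'. fps_X*Q' = fps_X*Q + F"
proof -
  from assms have "fps_X dvd F" by (simp add: X_dvd_iff)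
  then obtain G where "F = fps_X * G" by (auto elim: dvdE)
  then show ?thesis by (intro exI[of _ "Q + G"]) (simp add: algebra_simps)
qed

lemma sum10: "(\<Sum>i\<in>{1..10::int}. f i) = f 1 + f 2 + f 3 + f 4 + f 5 + f 6 + f 7 + f 8 + f 9 + f 10"
proof -
  have "{1..10::int} = {1,2,3,4,5,6,7,8,9,10}"
    by (rule set_eqI, simp only: atLeastAtMost_iff insert_iff empty_iff, presburger)
  then show ?thesis by (simp add: algebra_simps)
qed

lemma Bsum_total:
  assumes "(\<Sum>i\<in>{1..10}. b i) = 0"
  shows "Bsum b 1 + Bsum b 3 + Bsum b 5 + Bsum b 7 + Bsum b 9 = 0"
  using assms by (simp add: sum10 Bsum_def cyc_def algebra_simps)

lemma Bsum_cyc: "Bsum b j = cyc b j + cyc b (j+1)" by (simp add: Bsum_def)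

lemma part1b:
  fixes b c :: "int \<Rightarrow> complex fps"
  assumes sb: "(\<Sum>i\<in>{1..10}. b i) = 0" and sc: "(\<Sum>i\<in>{1..10}. c i) = 0"
    and cr: "crit (fps_nth (Bsum b 1) 0) (fps_nth (Bsum b 3) 0) (fps_nth (Bsum b 5) 0) (fps_nth (Bsum b 7) 0)
              (fps_nth (Bsum c 1) 0) (fps_nth (Bsum c 3) 0) (fps_nth (Bsum c 5) 0) (fps_nth (Bsum c 7) 0)"
  shows "Miso b c"
proof -
  define g1 where "g1 = fps_nth (Bsum c 1) 0"
  define g3 where "g3 = fps_nth (Bsum c 3) 0"
  define g5 where "g5 = fps_nth (Bsum c 5) 0"
  define g7 where "g7 = fps_nth (Bsum c 7) 0"
  define b1 where "b1 = fps_nth (Bsum b 1) 0"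
  define b3 where "b3 = fps_nth (Bsum b 3) 0"
  define b5 where "b5 = fps_nth (Bsum b 5) 0"
  define b7 where "b7 = fps_nth (Bsum b 7) 0"
  obtain p u r where p0: "p \<noteq> 0" and u0: "u \<noteq> 0" and f1: "eqc p u r g1 b1"
    and f2: "eqc p u r (g1+g3) (b1+b3)" and f3: "eqc p u r (g1+g3+g5) (b1+b3+b5)"
    and f4: "eqc p u r (g1+g3+g5+g7) (b1+b3+b5+b7)"
    using cr unfolding crit_def g1_def[symmetric] g3_def[symmetric] g5_def[symmetric] g7_def[symmetric]
      b1_def[symmetric] b3_def[symmetric] b5_def[symmetric] b7_def[symmetric] by blast
  define \<rho> where "\<rho> = fps_const r"
  define pf where "pf = fps_const p"
  define uf where "uf = fps_const u"
  define C0 where "C0 = Bsum c 1"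
  define B0 where "B0 = Bsum b 1"
  define C1 where "C1 = Bsum c 3"
  define B1 where "B1 = Bsum b 3"
  define C2 where "C2 = Bsum c 5"
  define B2 where "B2 = Bsum b 5"
  define C3 where "C3 = Bsum c 7"
  define B3 where "B3 = Bsum b 7"
  define C4 where "C4 = Bsum c 9"
  define B4 where "B4 = Bsum b 9"
  have hC: "C0 + C1 + C2 + C3 + C4 = 0" using Bsum_total[OF sc] by (simp add: C0_def C1_def C2_def C3_def C4_def)
  have hB: "B0 + B1 + B2 + B3 + B4 = 0" using Bsum_total[OF sb] by (simp add: B0_def B1_def B2_def B3_def B4_def)
  have hc0: "C0 = cyc c 1 + cyc c 2" by (simp add: C0_def Bsum_cyc)
  have hb0: "B0 = cyc b 1 + cyc b 2" by (simp add: B0_def Bsum_cyc)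
  have hc1: "C1 = cyc c 3 + cyc c 4" by (simp add: C1_def Bsum_cyc)
  have hb1: "B1 = cyc b 3 + cyc b 4" by (simp add: B1_def Bsum_cyc)
  have hc2: "C2 = cyc c 5 + cyc c 6" by (simp add: C2_def Bsum_cyc)
  have hb2: "B2 = cyc b 5 + cyc b 6" by (simp add: B2_def Bsum_cyc)
  have hc3: "C3 = cyc c 7 + cyc c 8" by (simp add: C3_def Bsum_cyc)
  have hb3: "B3 = cyc b 7 + cyc b 8" by (simp add: B3_def Bsum_cyc)
  have hc4: "C4 = cyc c 9 + cyc c 10" by (simp add: C4_def Bsum_cyc)
  have hb4: "B4 = cyc b 9 + cyc b 10" by (simp add: B4_def Bsum_cyc)
  define P0 where "P0 = pf"
  define U0 where "U0 = uf"
  define Q0 where "Q0 = (0::complex fps)"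
  define P1 where "P1 = P0 + C0*\<rho>"
  define U1 where "U1 = U0 - B0*\<rho>"
  define P2 where "P2 = P1 + C1*\<rho>"
  define U2 where "U2 = U1 - B1*\<rho>"
  define P3 where "P3 = P2 + C2*\<rho>"
  define U3 where "U3 = U2 - B2*\<rho>"
  define P4 where "P4 = P3 + C3*\<rho>"
  define U4 where "U4 = U3 - B3*\<rho>"
  have n\<rho>: "fps_nth \<rho> 0 = r" and npf: "fps_nth pf 0 = p" and nuf: "fps_nth uf 0 = u" by (simp_all add: \<rho>_def pf_def uf_def)
  have nC0: "fps_nth C0 0 = g1" by (simp add: C0_def g1_def)
  have nB0: "fps_nth B0 0 = b1" by (simp add: B0_def b1_def)
  have nC1: "fps_nth C1 0 = g3" by (simp add: C1_def g3_def)
  have nB1: "fps_nth B1 0 = b3" by (simp add: B1_def b3_def)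
  have nC2: "fps_nth C2 0 = g5" by (simp add: C2_def g5_def)
  have nB2: "fps_nth B2 0 = b5" by (simp add: B2_def b5_def)
  have nC3: "fps_nth C3 0 = g7" by (simp add: C3_def g7_def)
  have nB3: "fps_nth B3 0 = b7" by (simp add: B3_def b7_def)
  have "fps_nth (C0*U0 - B0*P0 - \<rho>*C0*B0) 0 = 0"
  proof -
    have "fps_nth (C0*U0 - B0*P0 - \<rho>*C0*B0) 0 = g1*fps_nth U0 0 - b1*fps_nth P0 0 - r*g1*b1"
      by (simp add: nC0 nB0 n\<rho>)
    also have "\<dots> = 0"
      using f1 unfolding eqc_def P0_def U0_def by (simp add: npf nuf algebra_simps)
    finally show ?thesis .
  qed
  then obtain Q1 where hQ1': "fps_X*Q1 = fps_X*Q0 + (C0*U0 - B0*P0 - \<rho>*C0*B0)"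
    using exQ by blast
  have hQ1: "fps_X*Q1 = fps_X*Q0 + C0*U0 - B0*P0 - \<rho>*C0*B0"
    using hQ1' by (simp only: add_diff_eq)
  have "fps_nth (C1*U1 - B1*P1 - \<rho>*C1*B1) 0 = 0"
  proof -
    have "fps_nth (C1*U1 - B1*P1 - \<rho>*C1*B1) 0 = g3*fps_nth U1 0 - b3*fps_nth P1 0 - r*g3*b3"
      by (simp add: nC1 nB1 n\<rho>)
    also have "\<dots> = 0"
      using f1 f2 unfolding eqc_def by (simp add: P0_def U0_def P1_def U1_def npf nuf n\<rho> nC0 nB0) algebra
    finally show ?thesis .
  qed
  then obtain Q2 where hQ2': "fps_X*Q2 = fps_X*Q1 + (C1*U1 - B1*P1 - \<rho>*C1*B1)"
    using exQ by blast
  have hQ2: "fps_X*Q2 = fps_X*Q1 + C1*U1 - B1*P1 - \<rho>*C1*B1"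
    using hQ2' by (simp only: add_diff_eq)
  have "fps_nth (C2*U2 - B2*P2 - \<rho>*C2*B2) 0 = 0"
  proof -
    have "fps_nth (C2*U2 - B2*P2 - \<rho>*C2*B2) 0 = g5*fps_nth U2 0 - b5*fps_nth P2 0 - r*g5*b5"
      by (simp add: nC2 nB2 n\<rho>)
    also have "\<dots> = 0"
      using f1 f2 f3 unfolding eqc_def by (simp add: P0_def U0_def P1_def U1_def P2_def U2_def npf nuf n\<rho> nC0 nB0 nC1 nB1) algebra
    finally show ?thesis .
  qed
  then obtain Q3 where hQ3': "fps_X*Q3 = fps_X*Q2 + (C2*U2 - B2*P2 - \<rho>*C2*B2)"
    using exQ by blast
  have hQ3: "fps_X*Q3 = fps_X*Q2 + C2*U2 - B2*P2 - \<rho>*C2*B2"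
    using hQ3' by (simp only: add_diff_eq)
  have "fps_nth (C3*U3 - B3*P3 - \<rho>*C3*B3) 0 = 0"
  proof -
    have "fps_nth (C3*U3 - B3*P3 - \<rho>*C3*B3) 0 = g7*fps_nth U3 0 - b7*fps_nth P3 0 - r*g7*b7"
      by (simp add: nC3 nB3 n\<rho>)
    also have "\<dots> = 0"
      using f1 f2 f3 f4 unfolding eqc_def by (simp add: P0_def U0_def P1_def U1_def P2_def U2_def P3_def U3_def npf nuf n\<rho> nC0 nB0 nC1 nB1 nC2 nB2) algebra
    finally show ?thesis .
  qed
  then obtain Q4 where hQ4': "fps_X*Q4 = fps_X*Q3 + (C3*U3 - B3*P3 - \<rho>*C3*B3)"
    using exQ by blast
  have hQ4: "fps_X*Q4 = fps_X*Q3 + C3*U3 - B3*P3 - \<rho>*C3*B3"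
    using hQ4' by (simp only: add_diff_eq)
  have hQ5: "fps_X*Q0 = fps_X*Q4 + C4*U4 - B4*P4 - \<rho>*C4*B4"
    using hQ1 hQ2 hQ3 hQ4 hC hB unfolding P1_def P2_def P3_def P4_def U1_def U2_def U3_def U4_def Q0_def P0_def U0_def
    by algebra
  have hP5: "P0 = P4 + C4*\<rho>" using hC unfolding P1_def P2_def P3_def P4_def by algebra
  have hU5: "U0 = U4 - B4*\<rho>" using hB unfolding U1_def U2_def U3_def U4_def by algebra
  define Om0 where "Om0 = mat2 (P0 + cyc c 1*\<rho>) (fps_X*Q0 + cyc c 1*U0 - (P0 + cyc c 1*\<rho>)*cyc b 1) \<rho> (U0 - \<rho>*cyc b 1)"
  define Om1 where "Om1 = mat2 (P1 + cyc c 3*\<rho>) (fps_X*Q1 + cyc c 3*U1 - (P1 + cyc c 3*\<rho>)*cyc b 3) \<rho> (U1 - \<rho>*cyc b 3)"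
  define Om2 where "Om2 = mat2 (P2 + cyc c 5*\<rho>) (fps_X*Q2 + cyc c 5*U2 - (P2 + cyc c 5*\<rho>)*cyc b 5) \<rho> (U2 - \<rho>*cyc b 5)"
  define Om3 where "Om3 = mat2 (P3 + cyc c 7*\<rho>) (fps_X*Q3 + cyc c 7*U3 - (P3 + cyc c 7*\<rho>)*cyc b 7) \<rho> (U3 - \<rho>*cyc b 7)"
  define Om4 where "Om4 = mat2 (P4 + cyc c 9*\<rho>) (fps_X*Q4 + cyc c 9*U4 - (P4 + cyc c 9*\<rho>)*cyc b 9) \<rho> (U4 - \<rho>*cyc b 9)"
  define E0 where "E0 = mat2 P0 Q0 (fps_X*\<rho>) U0"
  define E1 where "E1 = mat2 P1 Q1 (fps_X*\<rho>) U1"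
  define E2 where "E2 = mat2 P2 Q2 (fps_X*\<rho>) U2"
  define E3 where "E3 = mat2 P3 Q3 (fps_X*\<rho>) U3"
  define E4 where "E4 = mat2 P4 Q4 (fps_X*\<rho>) U4"
  note st0 = stepAll[OF hc0 hb0 P1_def U1_def hQ1 Om0_def, folded E0_def E1_def]
  note st1 = stepAll[OF hc1 hb1 P2_def U2_def hQ2 Om1_def, folded E1_def E2_def]
  note st2 = stepAll[OF hc2 hb2 P3_def U3_def hQ3 Om2_def, folded E2_def E3_def]
  note st3 = stepAll[OF hc3 hb3 P4_def U4_def hQ4 Om3_def, folded E3_def E4_def]
  note st4 = stepAll[OF hc4 hb4 hP5 hU5 hQ5 Om4_def, folded E4_def E0_def]
  define \<phi> :: "int \<Rightarrow> Zmat" where "\<phi> = (\<lambda>i. if i = 1 then Om0 else if i = 2 then E1 else if i = 3 then Om1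
     else if i = 4 then E2 else if i = 5 then Om2 else if i = 6 then E3 else if i = 7 then Om3
     else if i = 8 then E4 else if i = 9 then Om4 else E0)"
  have dE0: "fps_nth (det E0) 0 \<noteq> 0" using p0 u0 by (simp add: E0_def det_mat2 P0_def U0_def Q0_def pf_def uf_def)
  have dOm0: "det Om0 = det E0" by (rule det_chain[OF st0(1) det_xo det_xo])
  have dE1: "det E1 = det Om0" by (rule det_chain[OF st0(3) det_xe det_xe])
  have dOm1: "det Om1 = det E1" by (rule det_chain[OF st1(1) det_xo det_xo])
  have dE2: "det E2 = det Om1" by (rule det_chain[OF st1(3) det_xe det_xe])
  have dOm2: "det Om2 = det E2" by (rule det_chain[OF st2(1) det_xo det_xo])
  have dE3: "det E3 = det Om2" by (rule det_chain[OF st2(3) det_xe det_xe])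
  have dOm3: "det Om3 = det E3" by (rule det_chain[OF st3(1) det_xo det_xo])
  have dE4: "det E4 = det Om3" by (rule det_chain[OF st3(3) det_xe det_xe])
  have dOm4: "det Om4 = det E4" by (rule det_chain[OF st4(1) det_xo det_xo])
  have dets: "fps_nth (det (\<phi> i)) 0 \<noteq> 0" for i
    unfolding \<phi>_def using dE0 by (simp add: dOm0 dOm1 dOm2 dOm3 dOm4 dE1 dE2 dE3 dE4)
  have I: "\<forall>i \<in> {0..9}. invertible (\<phi> i)" using dets inv_det by blast
  have J: "\<phi> (j mod 10) ** xmap b j = xmap c j ** \<phi> (j - 1) \<and> \<phi> (j - 1) ** ymap b j = ymap c j ** \<phi> (j mod 10)"
    if "j \<in> {1..10}" for j
  proof -
    have "j = 1 \<or> j = 2 \<or> j = 3 \<or> j = 4 \<or> j = 5 \<or> j = 6 \<or> j = 7 \<or> j = 8 \<or> j = 9 \<or> j = 10"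
      using that by (simp only: atLeastAtMost_iff, presburger)
    then show ?thesis
      by (elim disjE) (simp_all add: \<phi>_def xmap_o xmap_e ymap_o ymap_e st0 st1 st2 st3 st4)
  qed
  show ?thesis unfolding Miso_def using I J by blast
qed

lemma cyc_cong: assumes "j mod 10 = k mod 10" shows "cyc b j = cyc b k"
proof -
  have "(j - 1) mod 10 = (k - 1) mod 10" using mod_diff_cong[OF assms refl] .
  then show ?thesis by (simp add: cyc_def)
qed
lemma Bsum_cong: assumes "j mod 10 = k mod 10" shows "Bsum b j = Bsum b k"
proof -
  have h: "(j + 1) mod 10 = (k + 1) mod 10" using mod_add_cong[OF assms refl] .
  show ?thesis unfolding Bsum_def by (simp add: cyc_cong[OF assms] cyc_cong[OF h])
qed

lemma modsh: "(l::int) mod 10 = a \<Longrightarrow> (l + d) mod 10 = (a + d) mod 10"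
  using mod_add_left_eq[of l 10 d] by simp
lemma modsh': "(l::int) mod 10 = a \<Longrightarrow> (l - d) mod 10 = (a - d) mod 10"
  using mod_diff_left_eq[of l 10 d] by simp

lemma nz0: "\<not> fps_X dvd (f::complex fps) \<Longrightarrow> fps_nth f 0 \<noteq> 0" by (simp add: X_dvd_iff)

lemma main_case1:
  fixes b c :: "int \<Rightarrow> complex fps" and l :: int
  assumes "(\<Sum>i\<in>{1..10}. b i) = 0" and "(\<Sum>i\<in>{1..10}. c i) = 0"
    and "\<forall>i. odd i \<longrightarrow> \<not> fps_X dvd Bsum b i"
    and "\<forall>i. odd i \<longrightarrow> \<not> fps_X dvd Bsum c i"
    and "odd l"
    and "fps_X dvd Bsum b l + Bsum b (l + 2)"
    and "\<forall>i. odd i \<and> i mod 10 \<noteq> l mod 10 \<longrightarrow> \<not> fps_X dvd Bsum b i + Bsum b (i + 2)"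
    and "fps_X dvd Bsum c l + Bsum c (l + 2)"
    and "\<forall>i. odd i \<and> i mod 10 \<noteq> l mod 10 \<longrightarrow> \<not> fps_X dvd Bsum c i + Bsum c (i + 2)"
    and hl: "l mod 10 = 1"
  shows "Miso b c \<longleftrightarrow>
    fps_X dvd ((Bsum b (l - 2) + Bsum b l) * Bsum c l * Bsum b (l + 4) * Bsum c (l + 6)
             - (Bsum c (l - 2) + Bsum c l) * Bsum b l * Bsum c (l + 4) * Bsum b (l + 6))"
proof -
  have M: "Miso b c \<longleftrightarrow> crit (fps_nth (Bsum b 1) 0) (fps_nth (Bsum b 3) 0) (fps_nth (Bsum b 5) 0) (fps_nth (Bsum b 7) 0)
              (fps_nth (Bsum c 1) 0) (fps_nth (Bsum c 3) 0) (fps_nth (Bsum c 5) 0) (fps_nth (Bsum c 7) 0)"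
    using part1a part1b assms(1,2) by blast
  have sB: "fps_nth (Bsum b 1) 0 + fps_nth (Bsum b 3) 0 + fps_nth (Bsum b 5) 0 + fps_nth (Bsum b 7) 0 + fps_nth (Bsum b 9) 0 = 0"
    using arg_cong[OF Bsum_total[OF assms(1)], of "\<lambda>x. fps_nth x 0"] by simp
  have sC: "fps_nth (Bsum c 1) 0 + fps_nth (Bsum c 3) 0 + fps_nth (Bsum c 5) 0 + fps_nth (Bsum c 7) 0 + fps_nth (Bsum c 9) 0 = 0"
    using arg_cong[OF Bsum_total[OF assms(2)], of "\<lambda>x. fps_nth x 0"] by simp
  have nzb1: "fps_nth (Bsum b 1) 0 \<noteq> 0" using assms(3) by (intro nz0) simp
  have nzb3: "fps_nth (Bsum b 3) 0 \<noteq> 0" using assms(3) by (intro nz0) simp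
  have nzb5: "fps_nth (Bsum b 5) 0 \<noteq> 0" using assms(3) by (intro nz0) simp
  have nzb7: "fps_nth (Bsum b 7) 0 \<noteq> 0" using assms(3) by (intro nz0) simp
  have nzb9: "fps_nth (Bsum b 9) 0 \<noteq> 0" using assms(3) by (intro nz0) simp
  have nzc1: "fps_nth (Bsum c 1) 0 \<noteq> 0" using assms(4) by (intro nz0) simp
  have nzc3: "fps_nth (Bsum c 3) 0 \<noteq> 0" using assms(4) by (intro nz0) simp
  have nzc5: "fps_nth (Bsum c 5) 0 \<noteq> 0" using assms(4) by (intro nz0) simp
  have nzc7: "fps_nth (Bsum c 7) 0 \<noteq> 0" using assms(4) by (intro nz0) simp
  have nzc9: "fps_nth (Bsum c 9) 0 \<noteq> 0" using assms(4) by (intro nz0) simp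

  have b0: "Bsum b (l) = Bsum b 1" by (rule Bsum_cong) (simp add: hl)
  have b2: "Bsum b (l + 2) = Bsum b 3" by (rule Bsum_cong) (simp add: modsh[OF hl])
  have bm2: "Bsum b (l - 2) = Bsum b 9" by (rule Bsum_cong) (simp add: modsh'[OF hl])
  have b4: "Bsum b (l + 4) = Bsum b 5" by (rule Bsum_cong) (simp add: modsh[OF hl])
  have b6: "Bsum b (l + 6) = Bsum b 7" by (rule Bsum_cong) (simp add: modsh[OF hl])
  have c0: "Bsum c (l) = Bsum c 1" by (rule Bsum_cong) (simp add: hl)
  have c2: "Bsum c (l + 2) = Bsum c 3" by (rule Bsum_cong) (simp add: modsh[OF hl])
  have cm2: "Bsum c (l - 2) = Bsum c 9" by (rule Bsum_cong) (simp add: modsh'[OF hl])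
  have c4: "Bsum c (l + 4) = Bsum c 5" by (rule Bsum_cong) (simp add: modsh[OF hl])
  have c6: "Bsum c (l + 6) = Bsum c 7" by (rule Bsum_cong) (simp add: modsh[OF hl])
  have pz: "fps_nth (Bsum b 1) 0 + fps_nth (Bsum b 3) 0 = 0" "fps_nth (Bsum c 1) 0 + fps_nth (Bsum c 3) 0 = 0"
    using assms(6,8) unfolding b0 b2 c0 c2 X_dvd_iff by simp_all
  have pnb3: "fps_nth (Bsum b 3) 0 + fps_nth (Bsum b 5) 0 \<noteq> 0"
  proof -
    have "\<not> fps_X dvd Bsum b 3 + Bsum b (3 + 2)" using assms(7)[rule_format, of 3] hl by simp
    then show ?thesis by (simp add: X_dvd_iff)
  qed
  have pnb5: "fps_nth (Bsum b 5) 0 + fps_nth (Bsum b 7) 0 \<noteq> 0"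
  proof -
    have "\<not> fps_X dvd Bsum b 5 + Bsum b (5 + 2)" using assms(7)[rule_format, of 5] hl by simp
    then show ?thesis by (simp add: X_dvd_iff)
  qed
  have pnb7: "fps_nth (Bsum b 7) 0 + fps_nth (Bsum b 9) 0 \<noteq> 0"
  proof -
    have "\<not> fps_X dvd Bsum b 7 + Bsum b (7 + 2)" using assms(7)[rule_format, of 7] hl by simp
    then show ?thesis by (simp add: X_dvd_iff)
  qed
  have pnb9: "fps_nth (Bsum b 9) 0 + fps_nth (Bsum b 1) 0 \<noteq> 0"
  proof -
    have "\<not> fps_X dvd Bsum b 9 + Bsum b (9 + 2)" using assms(7)[rule_format, of 9] hl by simp
    moreover have "Bsum b (9 + 2) = Bsum b 1" by (rule Bsum_cong) simp
    ultimately show ?thesis by (simp add: X_dvd_iff)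
  qed
  have pnc3: "fps_nth (Bsum c 3) 0 + fps_nth (Bsum c 5) 0 \<noteq> 0"
  proof -
    have "\<not> fps_X dvd Bsum c 3 + Bsum c (3 + 2)" using assms(9)[rule_format, of 3] hl by simp
    then show ?thesis by (simp add: X_dvd_iff)
  qed
  have pnc5: "fps_nth (Bsum c 5) 0 + fps_nth (Bsum c 7) 0 \<noteq> 0"
  proof -
    have "\<not> fps_X dvd Bsum c 5 + Bsum c (5 + 2)" using assms(9)[rule_format, of 5] hl by simp
    then show ?thesis by (simp add: X_dvd_iff)
  qed
  have pnc7: "fps_nth (Bsum c 7) 0 + fps_nth (Bsum c 9) 0 \<noteq> 0"
  proof -
    have "\<not> fps_X dvd Bsum c 7 + Bsum c (7 + 2)" using assms(9)[rule_format, of 7] hl by simp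
    then show ?thesis by (simp add: X_dvd_iff)
  qed
  have pnc9: "fps_nth (Bsum c 9) 0 + fps_nth (Bsum c 1) 0 \<noteq> 0"
  proof -
    have "\<not> fps_X dvd Bsum c 9 + Bsum c (9 + 2)" using assms(9)[rule_format, of 9] hl by simp
    moreover have "Bsum c (9 + 2) = Bsum c 1" by (rule Bsum_cong) simp
    ultimately show ?thesis by (simp add: X_dvd_iff)
  qed
  note cs = case1[of "fps_nth (Bsum b 1) 0" "fps_nth (Bsum b 3) 0" "fps_nth (Bsum b 5) 0" "fps_nth (Bsum b 7) 0" "fps_nth (Bsum b 9) 0" "fps_nth (Bsum c 1) 0" "fps_nth (Bsum c 3) 0" "fps_nth (Bsum c 5) 0" "fps_nth (Bsum c 7) 0" "fps_nth (Bsum c 9) 0"]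
  have e1: "fps_X dvd ((Bsum b (l - 2) + Bsum b l) * Bsum c l * Bsum b (l + 4) * Bsum c (l + 6)
           - (Bsum c (l - 2) + Bsum c l) * Bsum b l * Bsum c (l + 4) * Bsum b (l + 6)) \<longleftrightarrow> fps_nth ((Bsum b 9+Bsum b 1)*Bsum c 1*Bsum b 5*Bsum c 7 - (Bsum c 9+Bsum c 1)*Bsum b 1*Bsum c 5*Bsum b 7) 0 = 0"
    unfolding b0 b2 bm2 b4 b6 c0 c2 cm2 c4 c6 by (rule X_dvd_iff)
  have e2: "fps_nth ((Bsum b 9+Bsum b 1)*Bsum c 1*Bsum b 5*Bsum c 7 - (Bsum c 9+Bsum c 1)*Bsum b 1*Bsum c 5*Bsum b 7) 0 = (fps_nth (Bsum b 9) 0+fps_nth (Bsum b 1) 0)*fps_nth (Bsum c 1) 0*fps_nth (Bsum b 5) 0*fps_nth (Bsum c 7) 0 - (fps_nth (Bsum c 9) 0+fps_nth (Bsum c 1) 0)*fps_nth (Bsum b 1) 0*fps_nth (Bsum c 5) 0*fps_nth (Bsum b 7) 0" by simp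
  have e3: "crit (fps_nth (Bsum b 1) 0) (fps_nth (Bsum b 3) 0) (fps_nth (Bsum b 5) 0) (fps_nth (Bsum b 7) 0) (fps_nth (Bsum c 1) 0) (fps_nth (Bsum c 3) 0) (fps_nth (Bsum c 5) 0) (fps_nth (Bsum c 7) 0) \<longleftrightarrow> (fps_nth (Bsum b 9) 0+fps_nth (Bsum b 1) 0)*fps_nth (Bsum c 1) 0*fps_nth (Bsum b 5) 0*fps_nth (Bsum c 7) 0 - (fps_nth (Bsum c 9) 0+fps_nth (Bsum c 1) 0)*fps_nth (Bsum b 1) 0*fps_nth (Bsum c 5) 0*fps_nth (Bsum b 7) 0 = 0"
    by (rule cs) (rule nzb1 nzb3 nzb5 nzb7 nzb9 nzc1 nzc3 nzc5 nzc7 nzc9 sB sC pz pnb3 pnb5 pnb7 pnb9 pnc3 pnc5 pnc7 pnc9)+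
  show ?thesis using M e1 e2 e3 by simp
qed

lemma main_case3:
  fixes b c :: "int \<Rightarrow> complex fps" and l :: int
  assumes "(\<Sum>i\<in>{1..10}. b i) = 0" and "(\<Sum>i\<in>{1..10}. c i) = 0"
    and "\<forall>i. odd i \<longrightarrow> \<not> fps_X dvd Bsum b i"
    and "\<forall>i. odd i \<longrightarrow> \<not> fps_X dvd Bsum c i"
    and "odd l"
    and "fps_X dvd Bsum b l + Bsum b (l + 2)"
    and "\<forall>i. odd i \<and> i mod 10 \<noteq> l mod 10 \<longrightarrow> \<not> fps_X dvd Bsum b i + Bsum b (i + 2)"
    and "fps_X dvd Bsum c l + Bsum c (l + 2)"
    and "\<forall>i. odd i \<and> i mod 10 \<noteq> l mod 10 \<longrightarrow> \<not> fps_X dvd Bsum c i + Bsum c (i + 2)"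
    and hl: "l mod 10 = 3"
  shows "Miso b c \<longleftrightarrow>
    fps_X dvd ((Bsum b (l - 2) + Bsum b l) * Bsum c l * Bsum b (l + 4) * Bsum c (l + 6)
             - (Bsum c (l - 2) + Bsum c l) * Bsum b l * Bsum c (l + 4) * Bsum b (l + 6))"
proof -
  have M: "Miso b c \<longleftrightarrow> crit (fps_nth (Bsum b 1) 0) (fps_nth (Bsum b 3) 0) (fps_nth (Bsum b 5) 0) (fps_nth (Bsum b 7) 0)
              (fps_nth (Bsum c 1) 0) (fps_nth (Bsum c 3) 0) (fps_nth (Bsum c 5) 0) (fps_nth (Bsum c 7) 0)"
    using part1a part1b assms(1,2) by blast
  have sB: "fps_nth (Bsum b 1) 0 + fps_nth (Bsum b 3) 0 + fps_nth (Bsum b 5) 0 + fps_nth (Bsum b 7) 0 + fps_nth (Bsum b 9) 0 = 0"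
    using arg_cong[OF Bsum_total[OF assms(1)], of "\<lambda>x. fps_nth x 0"] by simp
  have sC: "fps_nth (Bsum c 1) 0 + fps_nth (Bsum c 3) 0 + fps_nth (Bsum c 5) 0 + fps_nth (Bsum c 7) 0 + fps_nth (Bsum c 9) 0 = 0"
    using arg_cong[OF Bsum_total[OF assms(2)], of "\<lambda>x. fps_nth x 0"] by simp
  have nzb1: "fps_nth (Bsum b 1) 0 \<noteq> 0" using assms(3) by (intro nz0) simp
  have nzb3: "fps_nth (Bsum b 3) 0 \<noteq> 0" using assms(3) by (intro nz0) simp
  have nzb5: "fps_nth (Bsum b 5) 0 \<noteq> 0" using assms(3) by (intro nz0) simp
  have nzb7: "fps_nth (Bsum b 7) 0 \<noteq> 0" using assms(3) by (intro nz0) simp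
  have nzb9: "fps_nth (Bsum b 9) 0 \<noteq> 0" using assms(3) by (intro nz0) simp
  have nzc1: "fps_nth (Bsum c 1) 0 \<noteq> 0" using assms(4) by (intro nz0) simp
  have nzc3: "fps_nth (Bsum c 3) 0 \<noteq> 0" using assms(4) by (intro nz0) simp
  have nzc5: "fps_nth (Bsum c 5) 0 \<noteq> 0" using assms(4) by (intro nz0) simp
  have nzc7: "fps_nth (Bsum c 7) 0 \<noteq> 0" using assms(4) by (intro nz0) simp
  have nzc9: "fps_nth (Bsum c 9) 0 \<noteq> 0" using assms(4) by (intro nz0) simp

  have b0: "Bsum b (l) = Bsum b 3" by (rule Bsum_cong) (simp add: hl)
  have b2: "Bsum b (l + 2) = Bsum b 5" by (rule Bsum_cong) (simp add: modsh[OF hl])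
  have bm2: "Bsum b (l - 2) = Bsum b 1" by (rule Bsum_cong) (simp add: modsh'[OF hl])
  have b4: "Bsum b (l + 4) = Bsum b 7" by (rule Bsum_cong) (simp add: modsh[OF hl])
  have b6: "Bsum b (l + 6) = Bsum b 9" by (rule Bsum_cong) (simp add: modsh[OF hl])
  have c0: "Bsum c (l) = Bsum c 3" by (rule Bsum_cong) (simp add: hl)
  have c2: "Bsum c (l + 2) = Bsum c 5" by (rule Bsum_cong) (simp add: modsh[OF hl])
  have cm2: "Bsum c (l - 2) = Bsum c 1" by (rule Bsum_cong) (simp add: modsh'[OF hl])
  have c4: "Bsum c (l + 4) = Bsum c 7" by (rule Bsum_cong) (simp add: modsh[OF hl])
  have c6: "Bsum c (l + 6) = Bsum c 9" by (rule Bsum_cong) (simp add: modsh[OF hl])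
  have pz: "fps_nth (Bsum b 3) 0 + fps_nth (Bsum b 5) 0 = 0" "fps_nth (Bsum c 3) 0 + fps_nth (Bsum c 5) 0 = 0"
    using assms(6,8) unfolding b0 b2 c0 c2 X_dvd_iff by simp_all
  have pnb1: "fps_nth (Bsum b 1) 0 + fps_nth (Bsum b 3) 0 \<noteq> 0"
  proof -
    have "\<not> fps_X dvd Bsum b 1 + Bsum b (1 + 2)" using assms(7)[rule_format, of 1] hl by simp
    then show ?thesis by (simp add: X_dvd_iff)
  qed
  have pnb5: "fps_nth (Bsum b 5) 0 + fps_nth (Bsum b 7) 0 \<noteq> 0"
  proof -
    have "\<not> fps_X dvd Bsum b 5 + Bsum b (5 + 2)" using assms(7)[rule_format, of 5] hl by simp
    then show ?thesis by (simp add: X_dvd_iff)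
  qed
  have pnb7: "fps_nth (Bsum b 7) 0 + fps_nth (Bsum b 9) 0 \<noteq> 0"
  proof -
    have "\<not> fps_X dvd Bsum b 7 + Bsum b (7 + 2)" using assms(7)[rule_format, of 7] hl by simp
    then show ?thesis by (simp add: X_dvd_iff)
  qed
  have pnb9: "fps_nth (Bsum b 9) 0 + fps_nth (Bsum b 1) 0 \<noteq> 0"
  proof -
    have "\<not> fps_X dvd Bsum b 9 + Bsum b (9 + 2)" using assms(7)[rule_format, of 9] hl by simp
    moreover have "Bsum b (9 + 2) = Bsum b 1" by (rule Bsum_cong) simp
    ultimately show ?thesis by (simp add: X_dvd_iff)
  qed
  have pnc1: "fps_nth (Bsum c 1) 0 + fps_nth (Bsum c 3) 0 \<noteq> 0"
  proof -
    have "\<not> fps_X dvd Bsum c 1 + Bsum c (1 + 2)" using assms(9)[rule_format, of 1] hl by simp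
    then show ?thesis by (simp add: X_dvd_iff)
  qed
  have pnc5: "fps_nth (Bsum c 5) 0 + fps_nth (Bsum c 7) 0 \<noteq> 0"
  proof -
    have "\<not> fps_X dvd Bsum c 5 + Bsum c (5 + 2)" using assms(9)[rule_format, of 5] hl by simp
    then show ?thesis by (simp add: X_dvd_iff)
  qed
  have pnc7: "fps_nth (Bsum c 7) 0 + fps_nth (Bsum c 9) 0 \<noteq> 0"
  proof -
    have "\<not> fps_X dvd Bsum c 7 + Bsum c (7 + 2)" using assms(9)[rule_format, of 7] hl by simp
    then show ?thesis by (simp add: X_dvd_iff)
  qed
  have pnc9: "fps_nth (Bsum c 9) 0 + fps_nth (Bsum c 1) 0 \<noteq> 0"
  proof -
    have "\<not> fps_X dvd Bsum c 9 + Bsum c (9 + 2)" using assms(9)[rule_format, of 9] hl by simp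
    moreover have "Bsum c (9 + 2) = Bsum c 1" by (rule Bsum_cong) simp
    ultimately show ?thesis by (simp add: X_dvd_iff)
  qed
  note cs = case3[of "fps_nth (Bsum b 1) 0" "fps_nth (Bsum b 3) 0" "fps_nth (Bsum b 5) 0" "fps_nth (Bsum b 7) 0" "fps_nth (Bsum b 9) 0" "fps_nth (Bsum c 1) 0" "fps_nth (Bsum c 3) 0" "fps_nth (Bsum c 5) 0" "fps_nth (Bsum c 7) 0" "fps_nth (Bsum c 9) 0"]
  have e1: "fps_X dvd ((Bsum b (l - 2) + Bsum b l) * Bsum c l * Bsum b (l + 4) * Bsum c (l + 6)
           - (Bsum c (l - 2) + Bsum c l) * Bsum b l * Bsum c (l + 4) * Bsum b (l + 6)) \<longleftrightarrow> fps_nth ((Bsum b 1+Bsum b 3)*Bsum c 3*Bsum b 7*Bsum c 9 - (Bsum c 1+Bsum c 3)*Bsum b 3*Bsum c 7*Bsum b 9) 0 = 0"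
    unfolding b0 b2 bm2 b4 b6 c0 c2 cm2 c4 c6 by (rule X_dvd_iff)
  have e2: "fps_nth ((Bsum b 1+Bsum b 3)*Bsum c 3*Bsum b 7*Bsum c 9 - (Bsum c 1+Bsum c 3)*Bsum b 3*Bsum c 7*Bsum b 9) 0 = (fps_nth (Bsum b 1) 0+fps_nth (Bsum b 3) 0)*fps_nth (Bsum c 3) 0*fps_nth (Bsum b 7) 0*fps_nth (Bsum c 9) 0 - (fps_nth (Bsum c 1) 0+fps_nth (Bsum c 3) 0)*fps_nth (Bsum b 3) 0*fps_nth (Bsum c 7) 0*fps_nth (Bsum b 9) 0" by simp
  have e3: "crit (fps_nth (Bsum b 1) 0) (fps_nth (Bsum b 3) 0) (fps_nth (Bsum b 5) 0) (fps_nth (Bsum b 7) 0) (fps_nth (Bsum c 1) 0) (fps_nth (Bsum c 3) 0) (fps_nth (Bsum c 5) 0) (fps_nth (Bsum c 7) 0) \<longleftrightarrow> (fps_nth (Bsum b 1) 0+fps_nth (Bsum b 3) 0)*fps_nth (Bsum c 3) 0*fps_nth (Bsum b 7) 0*fps_nth (Bsum c 9) 0 - (fps_nth (Bsum c 1) 0+fps_nth (Bsum c 3) 0)*fps_nth (Bsum b 3) 0*fps_nth (Bsum c 7) 0*fps_nth (Bsum b 9) 0 = 0"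
    by (rule cs) (rule nzb1 nzb3 nzb5 nzb7 nzb9 nzc1 nzc3 nzc5 nzc7 nzc9 sB sC pz pnb1 pnb5 pnb7 pnb9 pnc1 pnc5 pnc7 pnc9)+
  show ?thesis using M e1 e2 e3 by simp
qed

lemma main_case5:
  fixes b c :: "int \<Rightarrow> complex fps" and l :: int
  assumes "(\<Sum>i\<in>{1..10}. b i) = 0" and "(\<Sum>i\<in>{1..10}. c i) = 0"
    and "\<forall>i. odd i \<longrightarrow> \<not> fps_X dvd Bsum b i"
    and "\<forall>i. odd i \<longrightarrow> \<not> fps_X dvd Bsum c i"
    and "odd l"
    and "fps_X dvd Bsum b l + Bsum b (l + 2)"
    and "\<forall>i. odd i \<and> i mod 10 \<noteq> l mod 10 \<longrightarrow> \<not> fps_X dvd Bsum b i + Bsum b (i + 2)"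
    and "fps_X dvd Bsum c l + Bsum c (l + 2)"
    and "\<forall>i. odd i \<and> i mod 10 \<noteq> l mod 10 \<longrightarrow> \<not> fps_X dvd Bsum c i + Bsum c (i + 2)"
    and hl: "l mod 10 = 5"
  shows "Miso b c \<longleftrightarrow>
    fps_X dvd ((Bsum b (l - 2) + Bsum b l) * Bsum c l * Bsum b (l + 4) * Bsum c (l + 6)
             - (Bsum c (l - 2) + Bsum c l) * Bsum b l * Bsum c (l + 4) * Bsum b (l + 6))"
proof -
  have M: "Miso b c \<longleftrightarrow> crit (fps_nth (Bsum b 1) 0) (fps_nth (Bsum b 3) 0) (fps_nth (Bsum b 5) 0) (fps_nth (Bsum b 7) 0)
              (fps_nth (Bsum c 1) 0) (fps_nth (Bsum c 3) 0) (fps_nth (Bsum c 5) 0) (fps_nth (Bsum c 7) 0)"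
    using part1a part1b assms(1,2) by blast
  have sB: "fps_nth (Bsum b 1) 0 + fps_nth (Bsum b 3) 0 + fps_nth (Bsum b 5) 0 + fps_nth (Bsum b 7) 0 + fps_nth (Bsum b 9) 0 = 0"
    using arg_cong[OF Bsum_total[OF assms(1)], of "\<lambda>x. fps_nth x 0"] by simp
  have sC: "fps_nth (Bsum c 1) 0 + fps_nth (Bsum c 3) 0 + fps_nth (Bsum c 5) 0 + fps_nth (Bsum c 7) 0 + fps_nth (Bsum c 9) 0 = 0"
    using arg_cong[OF Bsum_total[OF assms(2)], of "\<lambda>x. fps_nth x 0"] by simp
  have nzb1: "fps_nth (Bsum b 1) 0 \<noteq> 0" using assms(3) by (intro nz0) simp
  have nzb3: "fps_nth (Bsum b 3) 0 \<noteq> 0" using assms(3) by (intro nz0) simp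
  have nzb5: "fps_nth (Bsum b 5) 0 \<noteq> 0" using assms(3) by (intro nz0) simp
  have nzb7: "fps_nth (Bsum b 7) 0 \<noteq> 0" using assms(3) by (intro nz0) simp
  have nzb9: "fps_nth (Bsum b 9) 0 \<noteq> 0" using assms(3) by (intro nz0) simp
  have nzc1: "fps_nth (Bsum c 1) 0 \<noteq> 0" using assms(4) by (intro nz0) simp
  have nzc3: "fps_nth (Bsum c 3) 0 \<noteq> 0" using assms(4) by (intro nz0) simp
  have nzc5: "fps_nth (Bsum c 5) 0 \<noteq> 0" using assms(4) by (intro nz0) simp
  have nzc7: "fps_nth (Bsum c 7) 0 \<noteq> 0" using assms(4) by (intro nz0) simp
  have nzc9: "fps_nth (Bsum c 9) 0 \<noteq> 0" using assms(4) by (intro nz0) simp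

  have b0: "Bsum b (l) = Bsum b 5" by (rule Bsum_cong) (simp add: hl)
  have b2: "Bsum b (l + 2) = Bsum b 7" by (rule Bsum_cong) (simp add: modsh[OF hl])
  have bm2: "Bsum b (l - 2) = Bsum b 3" by (rule Bsum_cong) (simp add: modsh'[OF hl])
  have b4: "Bsum b (l + 4) = Bsum b 9" by (rule Bsum_cong) (simp add: modsh[OF hl])
  have b6: "Bsum b (l + 6) = Bsum b 1" by (rule Bsum_cong) (simp add: modsh[OF hl])
  have c0: "Bsum c (l) = Bsum c 5" by (rule Bsum_cong) (simp add: hl)
  have c2: "Bsum c (l + 2) = Bsum c 7" by (rule Bsum_cong) (simp add: modsh[OF hl])
  have cm2: "Bsum c (l - 2) = Bsum c 3" by (rule Bsum_cong) (simp add: modsh'[OF hl])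
  have c4: "Bsum c (l + 4) = Bsum c 9" by (rule Bsum_cong) (simp add: modsh[OF hl])
  have c6: "Bsum c (l + 6) = Bsum c 1" by (rule Bsum_cong) (simp add: modsh[OF hl])
  have pz: "fps_nth (Bsum b 5) 0 + fps_nth (Bsum b 7) 0 = 0" "fps_nth (Bsum c 5) 0 + fps_nth (Bsum c 7) 0 = 0"
    using assms(6,8) unfolding b0 b2 c0 c2 X_dvd_iff by simp_all
  have pnb1: "fps_nth (Bsum b 1) 0 + fps_nth (Bsum b 3) 0 \<noteq> 0"
  proof -
    have "\<not> fps_X dvd Bsum b 1 + Bsum b (1 + 2)" using assms(7)[rule_format, of 1] hl by simp
    then show ?thesis by (simp add: X_dvd_iff)
  qed
  have pnb3: "fps_nth (Bsum b 3) 0 + fps_nth (Bsum b 5) 0 \<noteq> 0"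
  proof -
    have "\<not> fps_X dvd Bsum b 3 + Bsum b (3 + 2)" using assms(7)[rule_format, of 3] hl by simp
    then show ?thesis by (simp add: X_dvd_iff)
  qed
  have pnb7: "fps_nth (Bsum b 7) 0 + fps_nth (Bsum b 9) 0 \<noteq> 0"
  proof -
    have "\<not> fps_X dvd Bsum b 7 + Bsum b (7 + 2)" using assms(7)[rule_format, of 7] hl by simp
    then show ?thesis by (simp add: X_dvd_iff)
  qed
  have pnb9: "fps_nth (Bsum b 9) 0 + fps_nth (Bsum b 1) 0 \<noteq> 0"
  proof -
    have "\<not> fps_X dvd Bsum b 9 + Bsum b (9 + 2)" using assms(7)[rule_format, of 9] hl by simp
    moreover have "Bsum b (9 + 2) = Bsum b 1" by (rule Bsum_cong) simp
    ultimately show ?thesis by (simp add: X_dvd_iff)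
  qed
  have pnc1: "fps_nth (Bsum c 1) 0 + fps_nth (Bsum c 3) 0 \<noteq> 0"
  proof -
    have "\<not> fps_X dvd Bsum c 1 + Bsum c (1 + 2)" using assms(9)[rule_format, of 1] hl by simp
    then show ?thesis by (simp add: X_dvd_iff)
  qed
  have pnc3: "fps_nth (Bsum c 3) 0 + fps_nth (Bsum c 5) 0 \<noteq> 0"
  proof -
    have "\<not> fps_X dvd Bsum c 3 + Bsum c (3 + 2)" using assms(9)[rule_format, of 3] hl by simp
    then show ?thesis by (simp add: X_dvd_iff)
  qed
  have pnc7: "fps_nth (Bsum c 7) 0 + fps_nth (Bsum c 9) 0 \<noteq> 0"
  proof -
    have "\<not> fps_X dvd Bsum c 7 + Bsum c (7 + 2)" using assms(9)[rule_format, of 7] hl by simp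
    then show ?thesis by (simp add: X_dvd_iff)
  qed
  have pnc9: "fps_nth (Bsum c 9) 0 + fps_nth (Bsum c 1) 0 \<noteq> 0"
  proof -
    have "\<not> fps_X dvd Bsum c 9 + Bsum c (9 + 2)" using assms(9)[rule_format, of 9] hl by simp
    moreover have "Bsum c (9 + 2) = Bsum c 1" by (rule Bsum_cong) simp
    ultimately show ?thesis by (simp add: X_dvd_iff)
  qed
  note cs = case5[of "fps_nth (Bsum b 1) 0" "fps_nth (Bsum b 3) 0" "fps_nth (Bsum b 5) 0" "fps_nth (Bsum b 7) 0" "fps_nth (Bsum b 9) 0" "fps_nth (Bsum c 1) 0" "fps_nth (Bsum c 3) 0" "fps_nth (Bsum c 5) 0" "fps_nth (Bsum c 7) 0" "fps_nth (Bsum c 9) 0"]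
  have e1: "fps_X dvd ((Bsum b (l - 2) + Bsum b l) * Bsum c l * Bsum b (l + 4) * Bsum c (l + 6)
           - (Bsum c (l - 2) + Bsum c l) * Bsum b l * Bsum c (l + 4) * Bsum b (l + 6)) \<longleftrightarrow> fps_nth ((Bsum b 3+Bsum b 5)*Bsum c 5*Bsum b 9*Bsum c 1 - (Bsum c 3+Bsum c 5)*Bsum b 5*Bsum c 9*Bsum b 1) 0 = 0"
    unfolding b0 b2 bm2 b4 b6 c0 c2 cm2 c4 c6 by (rule X_dvd_iff)
  have e2: "fps_nth ((Bsum b 3+Bsum b 5)*Bsum c 5*Bsum b 9*Bsum c 1 - (Bsum c 3+Bsum c 5)*Bsum b 5*Bsum c 9*Bsum b 1) 0 = (fps_nth (Bsum b 3) 0+fps_nth (Bsum b 5) 0)*fps_nth (Bsum c 5) 0*fps_nth (Bsum b 9) 0*fps_nth (Bsum c 1) 0 - (fps_nth (Bsum c 3) 0+fps_nth (Bsum c 5) 0)*fps_nth (Bsum b 5) 0*fps_nth (Bsum c 9) 0*fps_nth (Bsum b 1) 0" by simp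
  have e3: "crit (fps_nth (Bsum b 1) 0) (fps_nth (Bsum b 3) 0) (fps_nth (Bsum b 5) 0) (fps_nth (Bsum b 7) 0) (fps_nth (Bsum c 1) 0) (fps_nth (Bsum c 3) 0) (fps_nth (Bsum c 5) 0) (fps_nth (Bsum c 7) 0) \<longleftrightarrow> (fps_nth (Bsum b 3) 0+fps_nth (Bsum b 5) 0)*fps_nth (Bsum c 5) 0*fps_nth (Bsum b 9) 0*fps_nth (Bsum c 1) 0 - (fps_nth (Bsum c 3) 0+fps_nth (Bsum c 5) 0)*fps_nth (Bsum b 5) 0*fps_nth (Bsum c 9) 0*fps_nth (Bsum b 1) 0 = 0"
    by (rule cs) (rule nzb1 nzb3 nzb5 nzb7 nzb9 nzc1 nzc3 nzc5 nzc7 nzc9 sB sC pz pnb1 pnb3 pnb7 pnb9 pnc1 pnc3 pnc7 pnc9)+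
  show ?thesis using M e1 e2 e3 by simp
qed

lemma main_case7:
  fixes b c :: "int \<Rightarrow> complex fps" and l :: int
  assumes "(\<Sum>i\<in>{1..10}. b i) = 0" and "(\<Sum>i\<in>{1..10}. c i) = 0"
    and "\<forall>i. odd i \<longrightarrow> \<not> fps_X dvd Bsum b i"
    and "\<forall>i. odd i \<longrightarrow> \<not> fps_X dvd Bsum c i"
    and "odd l"
    and "fps_X dvd Bsum b l + Bsum b (l + 2)"
    and "\<forall>i. odd i \<and> i mod 10 \<noteq> l mod 10 \<longrightarrow> \<not> fps_X dvd Bsum b i + Bsum b (i + 2)"
    and "fps_X dvd Bsum c l + Bsum c (l + 2)"
    and "\<forall>i. odd i \<and> i mod 10 \<noteq> l mod 10 \<longrightarrow> \<not> fps_X dvd Bsum c i + Bsum c (i + 2)"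
    and hl: "l mod 10 = 7"
  shows "Miso b c \<longleftrightarrow>
    fps_X dvd ((Bsum b (l - 2) + Bsum b l) * Bsum c l * Bsum b (l + 4) * Bsum c (l + 6)
             - (Bsum c (l - 2) + Bsum c l) * Bsum b l * Bsum c (l + 4) * Bsum b (l + 6))"
proof -
  have M: "Miso b c \<longleftrightarrow> crit (fps_nth (Bsum b 1) 0) (fps_nth (Bsum b 3) 0) (fps_nth (Bsum b 5) 0) (fps_nth (Bsum b 7) 0)
              (fps_nth (Bsum c 1) 0) (fps_nth (Bsum c 3) 0) (fps_nth (Bsum c 5) 0) (fps_nth (Bsum c 7) 0)"
    using part1a part1b assms(1,2) by blast
  have sB: "fps_nth (Bsum b 1) 0 + fps_nth (Bsum b 3) 0 + fps_nth (Bsum b 5) 0 + fps_nth (Bsum b 7) 0 + fps_nth (Bsum b 9) 0 = 0"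
    using arg_cong[OF Bsum_total[OF assms(1)], of "\<lambda>x. fps_nth x 0"] by simp
  have sC: "fps_nth (Bsum c 1) 0 + fps_nth (Bsum c 3) 0 + fps_nth (Bsum c 5) 0 + fps_nth (Bsum c 7) 0 + fps_nth (Bsum c 9) 0 = 0"
    using arg_cong[OF Bsum_total[OF assms(2)], of "\<lambda>x. fps_nth x 0"] by simp
  have nzb1: "fps_nth (Bsum b 1) 0 \<noteq> 0" using assms(3) by (intro nz0) simp
  have nzb3: "fps_nth (Bsum b 3) 0 \<noteq> 0" using assms(3) by (intro nz0) simp
  have nzb5: "fps_nth (Bsum b 5) 0 \<noteq> 0" using assms(3) by (intro nz0) simp
  have nzb7: "fps_nth (Bsum b 7) 0 \<noteq> 0" using assms(3) by (intro nz0) simp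
  have nzb9: "fps_nth (Bsum b 9) 0 \<noteq> 0" using assms(3) by (intro nz0) simp
  have nzc1: "fps_nth (Bsum c 1) 0 \<noteq> 0" using assms(4) by (intro nz0) simp
  have nzc3: "fps_nth (Bsum c 3) 0 \<noteq> 0" using assms(4) by (intro nz0) simp
  have nzc5: "fps_nth (Bsum c 5) 0 \<noteq> 0" using assms(4) by (intro nz0) simp
  have nzc7: "fps_nth (Bsum c 7) 0 \<noteq> 0" using assms(4) by (intro nz0) simp
  have nzc9: "fps_nth (Bsum c 9) 0 \<noteq> 0" using assms(4) by (intro nz0) simp

  have b0: "Bsum b (l) = Bsum b 7" by (rule Bsum_cong) (simp add: hl)
  have b2: "Bsum b (l + 2) = Bsum b 9" by (rule Bsum_cong) (simp add: modsh[OF hl])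
  have bm2: "Bsum b (l - 2) = Bsum b 5" by (rule Bsum_cong) (simp add: modsh'[OF hl])
  have b4: "Bsum b (l + 4) = Bsum b 1" by (rule Bsum_cong) (simp add: modsh[OF hl])
  have b6: "Bsum b (l + 6) = Bsum b 3" by (rule Bsum_cong) (simp add: modsh[OF hl])
  have c0: "Bsum c (l) = Bsum c 7" by (rule Bsum_cong) (simp add: hl)
  have c2: "Bsum c (l + 2) = Bsum c 9" by (rule Bsum_cong) (simp add: modsh[OF hl])
  have cm2: "Bsum c (l - 2) = Bsum c 5" by (rule Bsum_cong) (simp add: modsh'[OF hl])
  have c4: "Bsum c (l + 4) = Bsum c 1" by (rule Bsum_cong) (simp add: modsh[OF hl])
  have c6: "Bsum c (l + 6) = Bsum c 3" by (rule Bsum_cong) (simp add: modsh[OF hl])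
  have pz: "fps_nth (Bsum b 7) 0 + fps_nth (Bsum b 9) 0 = 0" "fps_nth (Bsum c 7) 0 + fps_nth (Bsum c 9) 0 = 0"
    using assms(6,8) unfolding b0 b2 c0 c2 X_dvd_iff by simp_all
  have pnb1: "fps_nth (Bsum b 1) 0 + fps_nth (Bsum b 3) 0 \<noteq> 0"
  proof -
    have "\<not> fps_X dvd Bsum b 1 + Bsum b (1 + 2)" using assms(7)[rule_format, of 1] hl by simp
    then show ?thesis by (simp add: X_dvd_iff)
  qed
  have pnb3: "fps_nth (Bsum b 3) 0 + fps_nth (Bsum b 5) 0 \<noteq> 0"
  proof -
    have "\<not> fps_X dvd Bsum b 3 + Bsum b (3 + 2)" using assms(7)[rule_format, of 3] hl by simp
    then show ?thesis by (simp add: X_dvd_iff)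
  qed
  have pnb5: "fps_nth (Bsum b 5) 0 + fps_nth (Bsum b 7) 0 \<noteq> 0"
  proof -
    have "\<not> fps_X dvd Bsum b 5 + Bsum b (5 + 2)" using assms(7)[rule_format, of 5] hl by simp
    then show ?thesis by (simp add: X_dvd_iff)
  qed
  have pnb9: "fps_nth (Bsum b 9) 0 + fps_nth (Bsum b 1) 0 \<noteq> 0"
  proof -
    have "\<not> fps_X dvd Bsum b 9 + Bsum b (9 + 2)" using assms(7)[rule_format, of 9] hl by simp
    moreover have "Bsum b (9 + 2) = Bsum b 1" by (rule Bsum_cong) simp
    ultimately show ?thesis by (simp add: X_dvd_iff)
  qed
  have pnc1: "fps_nth (Bsum c 1) 0 + fps_nth (Bsum c 3) 0 \<noteq> 0"
  proof -
    have "\<not> fps_X dvd Bsum c 1 + Bsum c (1 + 2)" using assms(9)[rule_format, of 1] hl by simp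
    then show ?thesis by (simp add: X_dvd_iff)
  qed
  have pnc3: "fps_nth (Bsum c 3) 0 + fps_nth (Bsum c 5) 0 \<noteq> 0"
  proof -
    have "\<not> fps_X dvd Bsum c 3 + Bsum c (3 + 2)" using assms(9)[rule_format, of 3] hl by simp
    then show ?thesis by (simp add: X_dvd_iff)
  qed
  have pnc5: "fps_nth (Bsum c 5) 0 + fps_nth (Bsum c 7) 0 \<noteq> 0"
  proof -
    have "\<not> fps_X dvd Bsum c 5 + Bsum c (5 + 2)" using assms(9)[rule_format, of 5] hl by simp
    then show ?thesis by (simp add: X_dvd_iff)
  qed
  have pnc9: "fps_nth (Bsum c 9) 0 + fps_nth (Bsum c 1) 0 \<noteq> 0"
  proof -
    have "\<not> fps_X dvd Bsum c 9 + Bsum c (9 + 2)" using assms(9)[rule_format, of 9] hl by simp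
    moreover have "Bsum c (9 + 2) = Bsum c 1" by (rule Bsum_cong) simp
    ultimately show ?thesis by (simp add: X_dvd_iff)
  qed
  note cs = case7[of "fps_nth (Bsum b 1) 0" "fps_nth (Bsum b 3) 0" "fps_nth (Bsum b 5) 0" "fps_nth (Bsum b 7) 0" "fps_nth (Bsum b 9) 0" "fps_nth (Bsum c 1) 0" "fps_nth (Bsum c 3) 0" "fps_nth (Bsum c 5) 0" "fps_nth (Bsum c 7) 0" "fps_nth (Bsum c 9) 0"]
  have e1: "fps_X dvd ((Bsum b (l - 2) + Bsum b l) * Bsum c l * Bsum b (l + 4) * Bsum c (l + 6)
           - (Bsum c (l - 2) + Bsum c l) * Bsum b l * Bsum c (l + 4) * Bsum b (l + 6)) \<longleftrightarrow> fps_nth ((Bsum b 5+Bsum b 7)*Bsum c 7*Bsum b 1*Bsum c 3 - (Bsum c 5+Bsum c 7)*Bsum b 7*Bsum c 1*Bsum b 3) 0 = 0"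
    unfolding b0 b2 bm2 b4 b6 c0 c2 cm2 c4 c6 by (rule X_dvd_iff)
  have e2: "fps_nth ((Bsum b 5+Bsum b 7)*Bsum c 7*Bsum b 1*Bsum c 3 - (Bsum c 5+Bsum c 7)*Bsum b 7*Bsum c 1*Bsum b 3) 0 = (fps_nth (Bsum b 5) 0+fps_nth (Bsum b 7) 0)*fps_nth (Bsum c 7) 0*fps_nth (Bsum b 1) 0*fps_nth (Bsum c 3) 0 - (fps_nth (Bsum c 5) 0+fps_nth (Bsum c 7) 0)*fps_nth (Bsum b 7) 0*fps_nth (Bsum c 1) 0*fps_nth (Bsum b 3) 0" by simp
  have e3: "crit (fps_nth (Bsum b 1) 0) (fps_nth (Bsum b 3) 0) (fps_nth (Bsum b 5) 0) (fps_nth (Bsum b 7) 0) (fps_nth (Bsum c 1) 0) (fps_nth (Bsum c 3) 0) (fps_nth (Bsum c 5) 0) (fps_nth (Bsum c 7) 0) \<longleftrightarrow> (fps_nth (Bsum b 5) 0+fps_nth (Bsum b 7) 0)*fps_nth (Bsum c 7) 0*fps_nth (Bsum b 1) 0*fps_nth (Bsum c 3) 0 - (fps_nth (Bsum c 5) 0+fps_nth (Bsum c 7) 0)*fps_nth (Bsum b 7) 0*fps_nth (Bsum c 1) 0*fps_nth (Bsum b 3) 0 = 0"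
    by (rule cs) (rule nzb1 nzb3 nzb5 nzb7 nzb9 nzc1 nzc3 nzc5 nzc7 nzc9 sB sC pz pnb1 pnb3 pnb5 pnb9 pnc1 pnc3 pnc5 pnc9)+
  show ?thesis using M e1 e2 e3 by simp
qed

lemma main_case9:
  fixes b c :: "int \<Rightarrow> complex fps" and l :: int
  assumes "(\<Sum>i\<in>{1..10}. b i) = 0" and "(\<Sum>i\<in>{1..10}. c i) = 0"
    and "\<forall>i. odd i \<longrightarrow> \<not> fps_X dvd Bsum b i"
    and "\<forall>i. odd i \<longrightarrow> \<not> fps_X dvd Bsum c i"
    and "odd l"
    and "fps_X dvd Bsum b l + Bsum b (l + 2)"
    and "\<forall>i. odd i \<and> i mod 10 \<noteq> l mod 10 \<longrightarrow> \<not> fps_X dvd Bsum b i + Bsum b (i + 2)"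
    and "fps_X dvd Bsum c l + Bsum c (l + 2)"
    and "\<forall>i. odd i \<and> i mod 10 \<noteq> l mod 10 \<longrightarrow> \<not> fps_X dvd Bsum c i + Bsum c (i + 2)"
    and hl: "l mod 10 = 9"
  shows "Miso b c \<longleftrightarrow>
    fps_X dvd ((Bsum b (l - 2) + Bsum b l) * Bsum c l * Bsum b (l + 4) * Bsum c (l + 6)
             - (Bsum c (l - 2) + Bsum c l) * Bsum b l * Bsum c (l + 4) * Bsum b (l + 6))"
proof -
  have M: "Miso b c \<longleftrightarrow> crit (fps_nth (Bsum b 1) 0) (fps_nth (Bsum b 3) 0) (fps_nth (Bsum b 5) 0) (fps_nth (Bsum b 7) 0)
              (fps_nth (Bsum c 1) 0) (fps_nth (Bsum c 3) 0) (fps_nth (Bsum c 5) 0) (fps_nth (Bsum c 7) 0)"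
    using part1a part1b assms(1,2) by blast
  have sB: "fps_nth (Bsum b 1) 0 + fps_nth (Bsum b 3) 0 + fps_nth (Bsum b 5) 0 + fps_nth (Bsum b 7) 0 + fps_nth (Bsum b 9) 0 = 0"
    using arg_cong[OF Bsum_total[OF assms(1)], of "\<lambda>x. fps_nth x 0"] by simp
  have sC: "fps_nth (Bsum c 1) 0 + fps_nth (Bsum c 3) 0 + fps_nth (Bsum c 5) 0 + fps_nth (Bsum c 7) 0 + fps_nth (Bsum c 9) 0 = 0"
    using arg_cong[OF Bsum_total[OF assms(2)], of "\<lambda>x. fps_nth x 0"] by simp
  have nzb1: "fps_nth (Bsum b 1) 0 \<noteq> 0" using assms(3) by (intro nz0) simp
  have nzb3: "fps_nth (Bsum b 3) 0 \<noteq> 0" using assms(3) by (intro nz0) simp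
  have nzb5: "fps_nth (Bsum b 5) 0 \<noteq> 0" using assms(3) by (intro nz0) simp
  have nzb7: "fps_nth (Bsum b 7) 0 \<noteq> 0" using assms(3) by (intro nz0) simp
  have nzb9: "fps_nth (Bsum b 9) 0 \<noteq> 0" using assms(3) by (intro nz0) simp
  have nzc1: "fps_nth (Bsum c 1) 0 \<noteq> 0" using assms(4) by (intro nz0) simp
  have nzc3: "fps_nth (Bsum c 3) 0 \<noteq> 0" using assms(4) by (intro nz0) simp
  have nzc5: "fps_nth (Bsum c 5) 0 \<noteq> 0" using assms(4) by (intro nz0) simp
  have nzc7: "fps_nth (Bsum c 7) 0 \<noteq> 0" using assms(4) by (intro nz0) simp
  have nzc9: "fps_nth (Bsum c 9) 0 \<noteq> 0" using assms(4) by (intro nz0) simp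

  have b0: "Bsum b (l) = Bsum b 9" by (rule Bsum_cong) (simp add: hl)
  have b2: "Bsum b (l + 2) = Bsum b 1" by (rule Bsum_cong) (simp add: modsh[OF hl])
  have bm2: "Bsum b (l - 2) = Bsum b 7" by (rule Bsum_cong) (simp add: modsh'[OF hl])
  have b4: "Bsum b (l + 4) = Bsum b 3" by (rule Bsum_cong) (simp add: modsh[OF hl])
  have b6: "Bsum b (l + 6) = Bsum b 5" by (rule Bsum_cong) (simp add: modsh[OF hl])
  have c0: "Bsum c (l) = Bsum c 9" by (rule Bsum_cong) (simp add: hl)
  have c2: "Bsum c (l + 2) = Bsum c 1" by (rule Bsum_cong) (simp add: modsh[OF hl])
  have cm2: "Bsum c (l - 2) = Bsum c 7" by (rule Bsum_cong) (simp add: modsh'[OF hl])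
  have c4: "Bsum c (l + 4) = Bsum c 3" by (rule Bsum_cong) (simp add: modsh[OF hl])
  have c6: "Bsum c (l + 6) = Bsum c 5" by (rule Bsum_cong) (simp add: modsh[OF hl])
  have pz: "fps_nth (Bsum b 9) 0 + fps_nth (Bsum b 1) 0 = 0" "fps_nth (Bsum c 9) 0 + fps_nth (Bsum c 1) 0 = 0"
    using assms(6,8) unfolding b0 b2 c0 c2 X_dvd_iff by simp_all
  have pnb1: "fps_nth (Bsum b 1) 0 + fps_nth (Bsum b 3) 0 \<noteq> 0"
  proof -
    have "\<not> fps_X dvd Bsum b 1 + Bsum b (1 + 2)" using assms(7)[rule_format, of 1] hl by simp
    then show ?thesis by (simp add: X_dvd_iff)
  qed
  have pnb3: "fps_nth (Bsum b 3) 0 + fps_nth (Bsum b 5) 0 \<noteq> 0"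
  proof -
    have "\<not> fps_X dvd Bsum b 3 + Bsum b (3 + 2)" using assms(7)[rule_format, of 3] hl by simp
    then show ?thesis by (simp add: X_dvd_iff)
  qed
  have pnb5: "fps_nth (Bsum b 5) 0 + fps_nth (Bsum b 7) 0 \<noteq> 0"
  proof -
    have "\<not> fps_X dvd Bsum b 5 + Bsum b (5 + 2)" using assms(7)[rule_format, of 5] hl by simp
    then show ?thesis by (simp add: X_dvd_iff)
  qed
  have pnb7: "fps_nth (Bsum b 7) 0 + fps_nth (Bsum b 9) 0 \<noteq> 0"
  proof -
    have "\<not> fps_X dvd Bsum b 7 + Bsum b (7 + 2)" using assms(7)[rule_format, of 7] hl by simp
    then show ?thesis by (simp add: X_dvd_iff)
  qed
  have pnc1: "fps_nth (Bsum c 1) 0 + fps_nth (Bsum c 3) 0 \<noteq> 0"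
  proof -
    have "\<not> fps_X dvd Bsum c 1 + Bsum c (1 + 2)" using assms(9)[rule_format, of 1] hl by simp
    then show ?thesis by (simp add: X_dvd_iff)
  qed
  have pnc3: "fps_nth (Bsum c 3) 0 + fps_nth (Bsum c 5) 0 \<noteq> 0"
  proof -
    have "\<not> fps_X dvd Bsum c 3 + Bsum c (3 + 2)" using assms(9)[rule_format, of 3] hl by simp
    then show ?thesis by (simp add: X_dvd_iff)
  qed
  have pnc5: "fps_nth (Bsum c 5) 0 + fps_nth (Bsum c 7) 0 \<noteq> 0"
  proof -
    have "\<not> fps_X dvd Bsum c 5 + Bsum c (5 + 2)" using assms(9)[rule_format, of 5] hl by simp
    then show ?thesis by (simp add: X_dvd_iff)
  qed
  have pnc7: "fps_nth (Bsum c 7) 0 + fps_nth (Bsum c 9) 0 \<noteq> 0"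
  proof -
    have "\<not> fps_X dvd Bsum c 7 + Bsum c (7 + 2)" using assms(9)[rule_format, of 7] hl by simp
    then show ?thesis by (simp add: X_dvd_iff)
  qed
  note cs = case9[of "fps_nth (Bsum b 1) 0" "fps_nth (Bsum b 3) 0" "fps_nth (Bsum b 5) 0" "fps_nth (Bsum b 7) 0" "fps_nth (Bsum b 9) 0" "fps_nth (Bsum c 1) 0" "fps_nth (Bsum c 3) 0" "fps_nth (Bsum c 5) 0" "fps_nth (Bsum c 7) 0" "fps_nth (Bsum c 9) 0"]
  have e1: "fps_X dvd ((Bsum b (l - 2) + Bsum b l) * Bsum c l * Bsum b (l + 4) * Bsum c (l + 6)
           - (Bsum c (l - 2) + Bsum c l) * Bsum b l * Bsum c (l + 4) * Bsum b (l + 6)) \<longleftrightarrow> fps_nth ((Bsum b 7+Bsum b 9)*Bsum c 9*Bsum b 3*Bsum c 5 - (Bsum c 7+Bsum c 9)*Bsum b 9*Bsum c 3*Bsum b 5) 0 = 0"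
    unfolding b0 b2 bm2 b4 b6 c0 c2 cm2 c4 c6 by (rule X_dvd_iff)
  have e2: "fps_nth ((Bsum b 7+Bsum b 9)*Bsum c 9*Bsum b 3*Bsum c 5 - (Bsum c 7+Bsum c 9)*Bsum b 9*Bsum c 3*Bsum b 5) 0 = (fps_nth (Bsum b 7) 0+fps_nth (Bsum b 9) 0)*fps_nth (Bsum c 9) 0*fps_nth (Bsum b 3) 0*fps_nth (Bsum c 5) 0 - (fps_nth (Bsum c 7) 0+fps_nth (Bsum c 9) 0)*fps_nth (Bsum b 9) 0*fps_nth (Bsum c 3) 0*fps_nth (Bsum b 5) 0" by simp
  have e3: "crit (fps_nth (Bsum b 1) 0) (fps_nth (Bsum b 3) 0) (fps_nth (Bsum b 5) 0) (fps_nth (Bsum b 7) 0) (fps_nth (Bsum c 1) 0) (fps_nth (Bsum c 3) 0) (fps_nth (Bsum c 5) 0) (fps_nth (Bsum c 7) 0) \<longleftrightarrow> (fps_nth (Bsum b 7) 0+fps_nth (Bsum b 9) 0)*fps_nth (Bsum c 9) 0*fps_nth (Bsum b 3) 0*fps_nth (Bsum c 5) 0 - (fps_nth (Bsum c 7) 0+fps_nth (Bsum c 9) 0)*fps_nth (Bsum b 9) 0*fps_nth (Bsum c 3) 0*fps_nth (Bsum b 5) 0 = 0"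
    by (rule cs) (rule nzb1 nzb3 nzb5 nzb7 nzb9 nzc1 nzc3 nzc5 nzc7 nzc9 sB sC pz pnb1 pnb3 pnb5 pnb7 pnc1 pnc3 pnc5 pnc7)+
  show ?thesis using M e1 e2 e3 by simp
qed

theorem theorem2p8:
  fixes b c :: "int \<Rightarrow> complex fps" and l :: int
  assumes "(\<Sum>i\<in>{1..10}. b i) = 0" and "(\<Sum>i\<in>{1..10}. c i) = 0"
    and "\<forall>i. odd i \<longrightarrow> \<not> fps_X dvd Bsum b i"
    and "\<forall>i. odd i \<longrightarrow> \<not> fps_X dvd Bsum c i"
    and "odd l"
    and "fps_X dvd Bsum b l + Bsum b (l + 2)"
    and "\<forall>i. odd i \<and> i mod 10 \<noteq> l mod 10 \<longrightarrow> \<not> fps_X dvd Bsum b i + Bsum b (i + 2)"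
    and "fps_X dvd Bsum c l + Bsum c (l + 2)"
    and "\<forall>i. odd i \<and> i mod 10 \<noteq> l mod 10 \<longrightarrow> \<not> fps_X dvd Bsum c i + Bsum c (i + 2)"
  shows "Miso b c \<longleftrightarrow>
    fps_X dvd ((Bsum b (l - 2) + Bsum b l) * Bsum c l * Bsum b (l + 4) * Bsum c (l + 6)
             - (Bsum c (l - 2) + Bsum c l) * Bsum b l * Bsum c (l + 4) * Bsum b (l + 6))"
proof -
  have lm: "l mod 10 = 1 \<or> l mod 10 = 3 \<or> l mod 10 = 5 \<or> l mod 10 = 7 \<or> l mod 10 = 9" using assms(5) by (simp add: odd_iff_mod_2_eq_one) presburger
  from lm show ?thesis
  proof (elim disjE)
    assume "l mod 10 = 1" then show ?thesis by (rule main_case1[OF assms])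
  next
    assume "l mod 10 = 3" then show ?thesis by (rule main_case3[OF assms])
  next
    assume "l mod 10 = 5" then show ?thesis by (rule main_case5[OF assms])
  next
    assume "l mod 10 = 7" then show ?thesis by (rule main_case7[OF assms])
  next
    assume "l mod 10 = 9" then show ?thesis by (rule main_case9[OF assms])
  qed
qed

end
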